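(* Let $n\ge1$, $b\ge1$. Let $\mu_1,\mu_2,\dots$ be i.i.d. random elements of $B_n$ with law $Q^B_{2b+1}$, and set $\tau_0=\mathrm{id}$, $\tau_r=\tau_{r-1}\circ\mu_r$ (the result of $r$ successive $(2b+1)$-shuffles). Then $(d(\tau_r^{-1}))_{r\ge0}$ is a Markov chain on $\{0,\dots,n\}$ with stationary distribution $\pi(j)=\overline{A(n,j)}/(2^nn!)$, and its transition matrix $K$ satisfies $K(i,j)=\pi(j)P(j,i)/\pi(i)$, where $P$ is the transition matrix of the type $B$ base-$(2b+1)$ carries chain; i.e. its formal time reversal with respect to $\pi$ is the type $B$ carries chain.
   Context: $B_n$ is the group of signed permutations (bijections $\sigma$ of $\{\pm1,\dots,\pm n\}$ with $\sigma(-i)=-\sigma(i)$), composed as functions. With the order $1<2<\dots<n<-n<\dots<-1$, $\sigma$ has a descent at $i$ ($1\le i\le n-1$) if $\sigma(i)>\sigma(i+1)$ and at $n$ if $\sigma(n)<0$; $d(\sigma)$ is the number of descents and $\overline{A(n,j)}$ the number of $\sigma\in B_n$ with $j$ descents. Binomial convention: $\binom{m}{n}=0$ if $m<n$. The type $B$ $(2b+1)$-shuffle measure (cut multinomially into $2b+1$ piles, flip the even-numbered piles, riffle) is $Q^B_{2b+1}(\tau)=\binom{n+b-d(\tau^{-1})}{n}/(2b+1)^n$; a $(2a+1)$-shuffle followed by a $(2b+1)$-shuffle has law $Q^B_{(2a+1)(2b+1)}$. The type $B$ base-$(2b+1)$ carries chain is the Markov chain on $\{0,\dots,n\}$ with $\kappa_0=0$,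 $\kappa_{t+1}=\lfloor(\kappa_t+b+X_{t+1,1}+\dots+X_{t+1,n})/(2b+1)\rfloor$, $X_{t,k}$ i.i.d. uniform on $\{0,\dots,2b\}$. *)

theory Defs
  imports Complex_Main "HOL-Combinatorics.Permutations"
begin

text \<open>Signed permutations of [n]: bijections of {+-1,...,+-n} (extended by the
identity elsewhere, in particular fixing 0) with sigma(-i) = -sigma(i).\<close>
definition signed_perms :: "nat \<Rightarrow> (int \<Rightarrow> int) set" where
  "signed_perms n = {\<sigma>. \<sigma> permutes {i::int. 1 \<le> \<bar>i\<bar> \<and> \<bar>i\<bar> \<le> int n}
                        \<and> (\<forall>i. \<sigma> (- i) = - \<sigma> i)}"

text \<open>Rank in the order 1 < 2 < ... < n < -n < ... < -1.\<close>
definition brank :: "nat \<Rightarrow> int \<Rightarrow> int" where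
  "brank n x = (if x > 0 then x else 2 * int n + 1 + x)"

definition bdescents :: "nat \<Rightarrow> (int \<Rightarrow> int) \<Rightarrow> nat set" where
  "bdescents n \<sigma> =
     {i. 1 \<le> i \<and> i \<le> n - 1 \<and> brank n (\<sigma> (int i)) > brank n (\<sigma> (int i + 1))}
     \<union> {i. i = n \<and> \<sigma> (int n) < 0}"

definition bdes :: "nat \<Rightarrow> (int \<Rightarrow> int) \<Rightarrow> nat" where
  "bdes n \<sigma> = card (bdescents n \<sigma>)"

definition eulerB :: "nat \<Rightarrow> nat \<Rightarrow> nat" where
  "eulerB n j = card {\<sigma> \<in> signed_perms n. bdes n \<sigma> = j}"

definition shuffleB :: "nat \<Rightarrow> nat \<Rightarrow> (int \<Rightarrow> int) \<Rightarrow> real" where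
  "shuffleB n b \<tau> = real ((n + b - bdes n (inv \<tau>)) choose n) / real (2 * b + 1) ^ n"

fun shuffle_prod :: "(nat \<Rightarrow> int \<Rightarrow> int) \<Rightarrow> nat \<Rightarrow> int \<Rightarrow> int" where
  "shuffle_prod \<mu> 0 = id"
| "shuffle_prod \<mu> (Suc r) = shuffle_prod \<mu> r \<circ> \<mu> (Suc r)"

text \<open>Probability that d(tau_k^{-1}) = s k for all k = 0..r, when mu_1,...,mu_r are
i.i.d. with law shuffleB n b.\<close>
definition path_prob :: "nat \<Rightarrow> nat \<Rightarrow> nat \<Rightarrow> (nat \<Rightarrow> nat) \<Rightarrow> real" where
  "path_prob n b r s =
     (\<Sum>\<mu> \<in> PiE {1..r} (\<lambda>_. signed_perms n).
        (\<Prod>k\<in>{1..r}. shuffleB n b (\<mu> k)) *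
        (if \<forall>k\<le>r. bdes n (inv (shuffle_prod \<mu> k)) = s k then 1 else 0))"

definition piB :: "nat \<Rightarrow> nat \<Rightarrow> real" where
  "piB n j = real (eulerB n j) / (2 ^ n * fact n)"

definition carriesB :: "nat \<Rightarrow> nat \<Rightarrow> nat \<Rightarrow> nat \<Rightarrow> real" where
  "carriesB n b i j =
     real (card {X \<in> PiE {1..n} (\<lambda>_. {0..2*b}).
                  (i + b + (\<Sum>k\<in>{1..n}. X k)) div (2 * b + 1) = j})
     / real (2 * b + 1) ^ n"

end

theory Submission
  imports Defs
begin


abbreviation SS :: "nat \<Rightarrow> int set" where
  "SS n \<equiv> {i::int. 1 \<le> \<bar>i\<bar> \<and> \<bar>i\<bar> \<le> int n}"

lemma SS_eq: "SS n = {-int n..-1} \<union> {1..int n}" by auto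

lemma finite_SS[simp]: "finite (SS n)" by (simp add: SS_eq)

lemma card_SS: "card (SS n) = 2*n"
proof -
  have "card (SS n) = card {-int n..-1} + card {1..int n}"
    unfolding SS_eq by (rule card_Un_disjoint) auto
  thus ?thesis by simp
qed

lemma sp_permutes: "\<sigma> \<in> signed_perms n \<Longrightarrow> \<sigma> permutes SS n"
  unfolding signed_perms_def by blast
lemma sp_odd: "\<sigma> \<in> signed_perms n \<Longrightarrow> \<sigma> (- x) = - \<sigma> x"
  unfolding signed_perms_def by blast
lemma sp_in: "\<sigma> \<in> signed_perms n \<Longrightarrow> x \<in> SS n \<Longrightarrow> \<sigma> x \<in> SS n"
  by (rule iffD2[OF permutes_in_image[OF sp_permutes]])
lemma sp_out: "\<sigma> \<in> signed_perms n \<Longrightarrow> x \<notin> SS n \<Longrightarrow> \<sigma> x = x"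
  by (rule permutes_not_in[OF sp_permutes])
lemma sp_bij: "\<sigma> \<in> signed_perms n \<Longrightarrow> bij \<sigma>"
  by (rule permutes_bij[OF sp_permutes])
lemma sp_inv_l[simp]: "\<sigma> \<in> signed_perms n \<Longrightarrow> inv \<sigma> (\<sigma> x) = x"
  by (rule permutes_inverses(2)[OF sp_permutes])
lemma sp_inv_r[simp]: "\<sigma> \<in> signed_perms n \<Longrightarrow> \<sigma> (inv \<sigma> x) = x"
  by (rule permutes_inverses(1)[OF sp_permutes])

lemma sp_id[simp]: "id \<in> signed_perms n"
  unfolding signed_perms_def using permutes_id by auto

lemma sp_inv: assumes "\<sigma> \<in> signed_perms n" shows "inv \<sigma> \<in> signed_perms n"
proof -
  have "inv \<sigma> (- x) = - inv \<sigma> x" for x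
  proof -
    have "\<sigma> (- inv \<sigma> x) = - x" using sp_odd[OF assms, of "inv \<sigma> x"] assms by simp
    hence "inv \<sigma> (\<sigma> (- inv \<sigma> x)) = inv \<sigma> (- x)" by simp
    thus ?thesis using assms by simp
  qed
  moreover have "inv \<sigma> permutes SS n" using assms permutes_inv sp_permutes by blast
  ultimately show ?thesis unfolding signed_perms_def by blast
qed

lemma sp_comp: "\<sigma> \<in> signed_perms n \<Longrightarrow> \<tau> \<in> signed_perms n \<Longrightarrow> \<sigma> \<circ> \<tau> \<in> signed_perms n"
  unfolding signed_perms_def using permutes_compose by (simp del: abs_le_iff) blast

lemma sp_inv_comp: "\<sigma> \<in> signed_perms n \<Longrightarrow> \<tau> \<in> signed_perms n \<Longrightarrow> inv (\<sigma> \<circ> \<tau>) = inv \<tau> \<circ> inv \<sigma>"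
  using sp_bij o_inv_distrib by blast

lemma sp_inv_inv[simp]: "\<sigma> \<in> signed_perms n \<Longrightarrow> inv (inv \<sigma>) = \<sigma>"
  using sp_bij inv_inv_eq by blast

lemma finite_sp[simp]: "finite (signed_perms n)"
proof -
  have "signed_perms n \<subseteq> {p. p permutes SS n}" unfolding signed_perms_def by blast
  moreover have "finite {p. p permutes SS n}" by (rule finite_permutations) simp
  ultimately show ?thesis by (rule finite_subset)
qed

definition unrank :: "nat \<Rightarrow> int \<Rightarrow> int" where
  "unrank n t = (if t \<le> int n then t else t - 2 * int n - 1)"

lemma brank_range: "x \<in> SS n \<Longrightarrow> 1 \<le> brank n x \<and> brank n x \<le> 2 * int n"
  by (auto simp: brank_def)
lemma brank_neg: "x \<in> SS n \<Longrightarrow> brank n (- x) = 2 * int n + 1 - brank n x"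
  by (auto simp: brank_def)
lemma brank_le_n: "x \<in> SS n \<Longrightarrow> brank n x \<le> int n \<longleftrightarrow> x > 0"
  by (auto simp: brank_def)
lemma unrank_brank: "x \<in> SS n \<Longrightarrow> unrank n (brank n x) = x"
  by (auto simp: brank_def unrank_def)
lemma brank_unrank: "1 \<le> t \<Longrightarrow> t \<le> 2 * int n \<Longrightarrow> brank n (unrank n t) = t \<and> unrank n t \<in> SS n"
  by (auto simp: brank_def unrank_def)
lemma brank_inj: "x \<in> SS n \<Longrightarrow> y \<in> SS n \<Longrightarrow> brank n x = brank n y \<Longrightarrow> x = y"
  by (metis unrank_brank)

lemma card_brank_less:
  assumes "1 \<le> t" "t \<le> 2 * int n + 1"
  shows "card {z \<in> SS n. brank n z < t} = nat (t - 1)"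
proof -
  have "{z \<in> SS n. brank n z < t} = unrank n ` {1..<t}"
  proof (intro equalityI subsetI)
    fix z assume "z \<in> {z \<in> SS n. brank n z < t}"
    thus "z \<in> unrank n ` {1..<t}" using brank_range[of z n] unrank_brank[of z n]
      by (auto intro!: image_eqI[where x="brank n z"])
  next
    fix z assume "z \<in> unrank n ` {1..<t}"
    then obtain u where "z = unrank n u" "1 \<le> u" "u < t" by auto
    thus "z \<in> {z \<in> SS n. brank n z < t}" using brank_unrank[of u n] assms by auto
  qed
  moreover have "inj_on (unrank n) {1..<t}"
    by (rule inj_onI) (metis assms(2) atLeastLessThan_iff brank_unrank le_less_trans linorder_not_le zle_add1_eq_le)
  ultimately show ?thesis by (simp add: card_image)
qed

definition hodd :: "(nat \<Rightarrow> int) \<Rightarrow> int \<Rightarrow> int" where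
  "hodd h x = (if x > 0 then h (nat x) else if x < 0 then - h (nat (- x)) else 0)"

lemma hodd_neg: "hodd h (- x) = - hodd h x" by (simp add: hodd_def)
lemma hodd_0[simp]: "hodd h 0 = 0" by (simp add: hodd_def)

definition br2 :: "nat \<Rightarrow> int \<Rightarrow> int" where
  "br2 n x = (if x = 0 then 2 * int n + 1 else 2 * brank n x)"

definition key :: "nat \<Rightarrow> (nat \<Rightarrow> int) \<Rightarrow> int \<Rightarrow> int" where
  "key n h x = - hodd h x * (4 * int n + 4) + br2 n x"

definition rc :: "nat \<Rightarrow> (nat \<Rightarrow> int) \<Rightarrow> int \<Rightarrow> nat" where
  "rc n h x = card {y \<in> SS n. key n h y < key n h x}"

definition phi :: "nat \<Rightarrow> (nat \<Rightarrow> int) \<Rightarrow> int \<Rightarrow> int" where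
  "phi n h x = (if x \<in> SS n then unrank n (int (rc n h x) + 1) else x)"

abbreviation SS0 where "SS0 n \<equiv> insert 0 (SS n)"

lemma br2_range: "x \<in> SS0 n \<Longrightarrow> 1 \<le> br2 n x \<and> br2 n x \<le> 4 * int n + 1"
  using brank_range[of x n] by (auto simp: br2_def)

lemma br2_inj: assumes "x \<in> SS0 n" "y \<in> SS0 n" "br2 n x = br2 n y" shows "x = y"
proof -
  have odd: "2 * a \<noteq> 2 * int n + 1" for a :: int by presburger
  show ?thesis
  proof (cases "x = 0")
    case True thus ?thesis using assms odd by (cases "y = 0") (auto simp: br2_def)
  next
    case False thus ?thesis using assms odd brank_inj[of x n y] by (cases "y = 0") (auto simp: br2_def)
  qed
qed

lemma br2_neg: "x \<in> SS0 n \<Longrightarrow> br2 n (- x) = 2 * (2 * int n + 1) - br2 n x"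
  using brank_neg[of x n] by (auto simp: br2_def)

lemma lex_arith:
  fixes a c p q M :: int
  assumes "\<bar>p - q\<bar> < M"
  shows "(- a * M + p < - c * M + q) \<longleftrightarrow> (a > c \<or> (a = c \<and> p < q))"
proof (cases "a = c")
  case False
  show ?thesis
  proof (cases "a > c")
    case True
    hence "(a - c) * M \<ge> 1 * M" using assms by (intro mult_right_mono) auto
    thus ?thesis using True assms by (auto simp: algebra_simps)
  next
    case F: False
    hence "(c - a) * M \<ge> 1 * M" using assms \<open>a \<noteq> c\<close> by (intro mult_right_mono) auto
    thus ?thesis using F False assms by (auto simp: algebra_simps)
  qed
qed simp

lemma key_less_iff:
  assumes "x \<in> SS0 n" "y \<in> SS0 n"
  shows "key n h x < key n h y \<longleftrightarrow>
    (hodd h x > hodd h y \<or> (hodd h x = hodd h y \<and> br2 n x < br2 n y))"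
proof -
  have "\<bar>br2 n x - br2 n y\<bar> < 4 * int n + 4" using br2_range[OF assms(1)] br2_range[OF assms(2)] by auto
  thus ?thesis unfolding key_def by (rule lex_arith)
qed

lemma key_inj: assumes "x \<in> SS0 n" "y \<in> SS0 n" "key n h x = key n h y" shows "x = y"
proof -
  have "\<not> key n h x < key n h y" "\<not> key n h y < key n h x" using assms(3) by simp_all
  hence "br2 n x = br2 n y" using key_less_iff[OF assms(1,2), of h] key_less_iff[OF assms(2,1), of h]
    by auto
  thus ?thesis using br2_inj assms by blast
qed

lemma key_trich: "x \<in> SS0 n \<Longrightarrow> y \<in> SS0 n \<Longrightarrow> x \<noteq> y \<Longrightarrow> key n h x < key n h y \<or> key n h y < key n h x"
  using key_inj[of x n y h] by force

lemma fin_SS_P[simp]: "finite {y. 1 \<le> \<bar>y\<bar> \<and> \<bar>y\<bar> \<le> int n \<and> P y}"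
  by (rule finite_subset[OF _ finite_SS]) auto

lemma key_neg: "x \<in> SS0 n \<Longrightarrow> key n h (- x) = 2 * (2 * int n + 1) - key n h x"
  by (simp add: key_def br2_neg hodd_neg)

lemma key_0: "key n h 0 = 2 * int n + 1" by (simp add: key_def br2_def)

lemma neg_SS: "x \<in> SS n \<Longrightarrow> - x \<in> SS n" by auto

lemma rc_less: "x \<in> SS n \<Longrightarrow> rc n h x < 2 * n"
proof -
  assume x: "x \<in> SS n"
  have "{y \<in> SS n. key n h y < key n h x} \<subset> SS n" using x by auto
  hence "rc n h x < card (SS n)" unfolding rc_def by (rule psubset_card_mono[rotated]) simp
  thus ?thesis by (simp add: card_SS)
qed

lemma rc_mono:
  assumes "x \<in> SS n" "y \<in> SS n" "key n h x < key n h y"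
  shows "rc n h x < rc n h y"
proof -
  have "{z \<in> SS n. key n h z < key n h x} \<subset> {z \<in> SS n. key n h z < key n h y}"
    using assms by auto
  thus ?thesis unfolding rc_def by (rule psubset_card_mono[rotated]) simp
qed

lemma rc_less_iff:
  assumes "x \<in> SS n" "y \<in> SS n"
  shows "rc n h x < rc n h y \<longleftrightarrow> key n h x < key n h y"
proof
  assume a: "rc n h x < rc n h y"
  show "key n h x < key n h y"
  proof (rule ccontr)
    assume "\<not> ?thesis"
    moreover have "x \<noteq> y" using a by auto
    ultimately have "key n h y < key n h x" using key_trich[of x n y h] assms by auto
    thus False using rc_mono[OF assms(2,1)] a by fastforce
  qed
qed (rule rc_mono[OF assms])

lemma card_neg_image: "card (uminus ` A) = card (A :: int set)"
  by (rule card_image) (simp add: inj_on_def)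

lemma rc_neg:
  assumes x: "x \<in> SS n"
  shows "rc n h (- x) = 2 * n - 1 - rc n h x"
proof -
  let ?L = "{y \<in> SS n. key n h y < key n h x}"
  let ?G = "{y \<in> SS n. key n h y > key n h x}"
  have part: "SS n = (?L \<union> ?G) \<union> {x}" using key_trich[of _ n x h] x by auto
  have "card (SS n) = card (?L \<union> ?G) + card {x}"
    by (subst part, rule card_Un_disjoint) auto
  also have "card (?L \<union> ?G) = card ?L + card ?G"
    by (rule card_Un_disjoint) auto
  finally have "card (SS n) = card ?L + card ?G + 1" by simp
  moreover have "{y \<in> SS n. key n h y < key n h (- x)} = uminus ` ?G"
  proof (intro equalityI subsetI)
    fix y assume "y \<in> {y \<in> SS n. key n h y < key n h (- x)}"
    hence "y \<in> SS n" "key n h y < key n h (- x)" by auto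
    hence "- y \<in> ?G" using key_neg[of y n h] key_neg[of x n h] x by auto
    thus "y \<in> uminus ` ?G" by (intro image_eqI[where x="- y"]) auto
  next
    fix y assume "y \<in> uminus ` ?G"
    then obtain z where "y = - z" "z \<in> ?G" by auto
    thus "y \<in> {y \<in> SS n. key n h y < key n h (- x)}" using key_neg[of z n h] key_neg[of x n h] x
      by auto
  qed
  ultimately show ?thesis unfolding rc_def by (simp add: card_neg_image card_SS)
qed

lemma phi_SS: "x \<in> SS n \<Longrightarrow> phi n h x \<in> SS n \<and> brank n (phi n h x) = int (rc n h x) + 1"
  using brank_unrank[of "int (rc n h x) + 1" n] rc_less[of x n h] by (auto simp: phi_def)

lemma phi_sp: "phi n h \<in> signed_perms n"
proof -
  have inj: "inj_on (phi n h) (SS n)"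
  proof (rule inj_onI)
    fix x y assume "x \<in> SS n" "y \<in> SS n" "phi n h x = phi n h y"
    hence "rc n h x = rc n h y" using phi_SS[of x n h] phi_SS[of y n h] by auto
    show "x = y"
    proof (rule ccontr)
      assume "x \<noteq> y"
      hence "key n h x < key n h y \<or> key n h y < key n h x"
        using key_trich[of x n y h] \<open>x \<in> SS n\<close> \<open>y \<in> SS n\<close> by auto
      thus False using rc_mono[of x n y h] rc_mono[of y n x h] \<open>x \<in> SS n\<close> \<open>y \<in> SS n\<close>
        \<open>rc n h x = rc n h y\<close> by auto
    qed
  qed
  have img: "phi n h ` SS n = SS n"
    by (rule card_subset_eq) (use inj phi_SS in \<open>auto simp: card_image\<close>)
  have b: "bij_betw (phi n h) (SS n) (SS n)" using inj img by (simp add: bij_betw_def)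
  have out: "\<And>x. x \<notin> SS n \<Longrightarrow> phi n h x = x" unfolding phi_def by (rule if_not_P)
  have perm: "phi n h permutes SS n" using bij_imp_permutes[OF b] out by blast
  have odd: "phi n h (- x) = - phi n h x" for x
  proof (cases "x \<in> SS n")
    case True
    have "brank n (phi n h (- x)) = brank n (- phi n h x)"
      using phi_SS[OF True, of h] phi_SS[OF neg_SS[OF True], of h] rc_neg[OF True, of h]
        brank_neg[of "phi n h x" n] rc_less[OF True, of h]
      by auto
    moreover have "phi n h (- x) \<in> SS n" using phi_SS[OF neg_SS[OF True], of h] by blast
    moreover have "- phi n h x \<in> SS n" using phi_SS[OF True, of h] neg_SS by blast
    ultimately show ?thesis by (rule brank_inj[rotated 2])
  next
    case False
    hence "- x \<notin> SS n" by auto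
    thus ?thesis using False unfolding phi_def by (simp only: if_not_P if_False)
  qed
  show ?thesis unfolding signed_perms_def using perm odd by blast
qed

lemma phi_neg_iff:
  assumes x: "x \<in> SS n"
  shows "phi n h x < 0 \<longleftrightarrow> key n h x > 2 * int n + 1"
proof -
  let ?P = "{y \<in> SS n. key n h y < 2 * int n + 1}"
  have part: "SS n = ?P \<union> uminus ` ?P"
  proof (intro equalityI subsetI)
    fix y assume y: "y \<in> SS n"
    have "key n h y \<noteq> 2 * int n + 1" using key_inj[of y n 0 h] key_0[of n h] y by auto
    thus "y \<in> ?P \<union> uminus ` ?P"
      using y key_neg[of y n h] by (cases "key n h y < 2 * int n + 1") (auto intro!: image_eqI[where x="- y"])
  next
    fix y assume "y \<in> ?P \<union> uminus ` ?P"
    thus "y \<in> SS n" by auto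
  qed
  have "card (SS n) = card ?P + card (uminus ` ?P)"
  proof (subst (1) part, rule card_Un_disjoint)
    show "?P \<inter> uminus ` ?P = {}"
    proof (rule ccontr)
      assume "?P \<inter> uminus ` ?P \<noteq> {}"
      then obtain y where "y \<in> ?P" "- y \<in> ?P" by force
      thus False using key_neg[of y n h] by auto
    qed
  qed auto
  hence cP: "card ?P = n" by (simp add: card_SS card_neg_image)
  have px: "phi n h x \<in> SS n" using phi_SS[OF x] by blast
  have "phi n h x < 0 \<longleftrightarrow> brank n (phi n h x) > int n"
    using brank_le_n[OF px] px by force
  also have "\<dots> \<longleftrightarrow> rc n h x \<ge> n" using phi_SS[OF x, of h] by auto
  also have "\<dots> \<longleftrightarrow> key n h x > 2 * int n + 1"
  proof
    assume "rc n h x \<ge> n"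
    show "key n h x > 2 * int n + 1"
    proof (rule ccontr)
      assume "\<not> ?thesis"
      hence "key n h x < 2 * int n + 1" using key_inj[of x n 0 h] key_0[of n h] x by force
      hence "{y \<in> SS n. key n h y < key n h x} \<subset> ?P" using x by auto
      hence "card {y \<in> SS n. key n h y < key n h x} < card ?P"
        by (rule psubset_card_mono[rotated]) simp
      hence "rc n h x < n" unfolding rc_def using cP by simp
      thus False using \<open>rc n h x \<ge> n\<close> by simp
    qed
  next
    assume "key n h x > 2 * int n + 1"
    hence "?P \<subseteq> {y \<in> SS n. key n h y < key n h x}" by auto
    hence "card ?P \<le> card {y \<in> SS n. key n h y < key n h x}"
      by (rule card_mono[rotated]) simp
    thus "rc n h x \<ge> n" unfolding rc_def using cP by simp
  qed
  finally show ?thesis .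
qed


definition dd :: "nat \<Rightarrow> (int \<Rightarrow> int) \<Rightarrow> nat \<Rightarrow> bool" where
  "dd n \<sigma> k = (if k < n then brank n (\<sigma> (int k)) > brank n (\<sigma> (int k + 1)) else \<sigma> (int n) < 0)"

lemma bdescents_eq: "n \<ge> 1 \<Longrightarrow> bdescents n \<sigma> = {k \<in> {1..n}. dd n \<sigma> k}"
  unfolding bdescents_def dd_def by auto

lemma bdes_eq: "n \<ge> 1 \<Longrightarrow> bdes n \<sigma> = card {k \<in> {1..n}. dd n \<sigma> k}"
  by (simp add: bdes_def bdescents_eq)

lemma bdes_le: "n \<ge> 1 \<Longrightarrow> bdes n \<sigma> \<le> n"
proof -
  assume "n \<ge> 1"
  have "card {k \<in> {1..n}. dd n \<sigma> k} \<le> card {1..n}" by (rule card_mono) auto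
  thus ?thesis using \<open>n \<ge> 1\<close> by (simp add: bdes_eq)
qed

lemma int_SS: "1 \<le> k \<Longrightarrow> k \<le> n \<Longrightarrow> int k \<in> SS n" by auto

definition ext :: "nat \<Rightarrow> (nat \<Rightarrow> int) \<Rightarrow> nat \<Rightarrow> int" where
  "ext n g k = (if k \<le> n then g k else 0)"

definition evt :: "nat \<Rightarrow> (nat \<Rightarrow> int) \<Rightarrow> (nat \<Rightarrow> bool) \<Rightarrow> nat \<Rightarrow> bool" where
  "evt n g \<delta> k = (ext n g (Suc k) > ext n g k \<or> (ext n g (Suc k) = ext n g k \<and> \<delta> k))"

lemma desc_phi:
  assumes \<rho>: "\<rho> \<in> signed_perms n" and k: "1 \<le> k" "k \<le> n"
  shows "dd n (phi n h \<circ> \<rho>) k \<longleftrightarrow> evt n (\<lambda>k. hodd h (\<rho> (int k))) (dd n \<rho>) k"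
proof (cases "k < n")
  case True
  have a: "\<rho> (int k) \<in> SS n" using sp_in[OF \<rho> int_SS[OF k]] .
  have b: "\<rho> (int k + 1) \<in> SS n" using sp_in[OF \<rho> int_SS[of "Suc k" n]] True by (simp add: add.commute)
  have "dd n (phi n h \<circ> \<rho>) k \<longleftrightarrow> rc n h (\<rho> (int k + 1)) < rc n h (\<rho> (int k))"
    using True phi_SS[OF a, of h] phi_SS[OF b, of h] by (auto simp: dd_def)
  also have "\<dots> \<longleftrightarrow> key n h (\<rho> (int k + 1)) < key n h (\<rho> (int k))"
    by (rule rc_less_iff[OF b a])
  also have "\<dots> \<longleftrightarrow> evt n (\<lambda>k. hodd h (\<rho> (int k))) (dd n \<rho>) k"
    using key_less_iff[of "\<rho> (int k + 1)" n "\<rho> (int k)" h] a b True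
    by (auto simp: evt_def ext_def dd_def br2_def add.commute)
  finally show ?thesis .
next
  case False
  hence kn: "k = n" using k by simp
  have a: "\<rho> (int n) \<in> SS n" using sp_in[OF \<rho> int_SS[OF k(1)]] kn by simp
  have "dd n (phi n h \<circ> \<rho>) k \<longleftrightarrow> key n h 0 < key n h (\<rho> (int n))"
    using phi_neg_iff[OF a, of h] kn by (simp add: dd_def key_0)
  also have "\<dots> \<longleftrightarrow> evt n (\<lambda>k. hodd h (\<rho> (int k))) (dd n \<rho>) k"
    using key_less_iff[of 0 n "\<rho> (int n)" h] a kn brank_le_n[OF a]
    by (auto simp: evt_def ext_def dd_def br2_def)
  finally show ?thesis .
qed

lemma bdes_phi:
  assumes "n \<ge> 1" "\<rho> \<in> signed_perms n"
  shows "bdes n (phi n h \<circ> \<rho>) = card {k \<in> {1..n}. evt n (\<lambda>k. hodd h (\<rho> (int k))) (dd n \<rho>) k}"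
  unfolding bdes_eq[OF assms(1)] using desc_phi[OF assms(2)] by (metis (no_types, lifting) atLeastAtMost_iff)

lemma bdes_id: "n \<ge> 1 \<Longrightarrow> bdes n id = 0"
  by (auto simp: bdes_eq dd_def brank_def)

lemma bdes0:
  assumes n: "n \<ge> 1" and \<sigma>: "\<sigma> \<in> signed_perms n" and d: "bdes n \<sigma> = 0"
  shows "\<sigma> = id"
proof -
  have nod: "\<And>k. 1 \<le> k \<Longrightarrow> k \<le> n \<Longrightarrow> \<not> dd n \<sigma> k"
    using d by (auto simp: bdes_eq[OF n])
  define f where "f k = brank n (\<sigma> (int k))" for k
  have inS: "\<And>k. 1 \<le> k \<Longrightarrow> k \<le> n \<Longrightarrow> \<sigma> (int k) \<in> SS n" using sp_in[OF \<sigma> int_SS] by blast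
  have step: "f k < f (Suc k)" if "1 \<le> k" "k < n" for k
  proof -
    have "f k \<le> f (Suc k)" using nod[of k] that by (auto simp: dd_def f_def add.commute)
    moreover have "f k \<noteq> f (Suc k)"
    proof
      assume "f k = f (Suc k)"
      hence "\<sigma> (int k) = \<sigma> (int (Suc k))"
        using brank_inj[OF inS[OF that(1)] inS[of "Suc k"]] that unfolding f_def by simp
      hence "int k = int (Suc k)" using sp_bij[OF \<sigma>] by (simp add: bij_def inj_eq)
      thus False by simp
    qed
    ultimately show ?thesis by simp
  qed
  have lo: "k \<le> n \<Longrightarrow> 1 \<le> k \<Longrightarrow> int k \<le> f k" for k
  proof (induction k)
    case 0 thus ?case by simp
  next
    case (Suc k)
    show ?case
    proof (cases "k = 0")
      case True thus ?thesis using brank_range[OF inS[of 1]] Suc by (simp add: f_def)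
    next
      case False thus ?thesis using Suc step[of k] by simp
    qed
  qed
  have pos_n: "\<sigma> (int n) > 0"
  proof -
    have "\<not> \<sigma> (int n) < 0" using nod[of n] n by (simp add: dd_def)
    moreover have "\<sigma> (int n) \<noteq> 0" using inS[of n] n by auto
    ultimately show ?thesis by simp
  qed
  have hi: "t \<le> n - 1 \<Longrightarrow> f (n - t) \<le> int (n - t)" for t
  proof (induction t)
    case 0 thus ?case using pos_n inS[of n] n by (simp add: f_def brank_def)
  next
    case (Suc t)
    have "f (n - Suc t) < f (Suc (n - Suc t))" using step[of "n - Suc t"] Suc.prems by simp
    moreover have "Suc (n - Suc t) = n - t" using Suc.prems by simp
    ultimately show ?case using Suc by simp
  qed
  have fk: "1 \<le> k \<Longrightarrow> k \<le> n \<Longrightarrow> \<sigma> (int k) = int k" for k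
  proof -
    assume k: "1 \<le> k" "k \<le> n"
    have "f k \<le> int k" using hi[of "n - k"] k by simp
    hence "f k = int k" using lo[OF k(2,1)] by simp
    hence "brank n (\<sigma> (int k)) \<le> int n" using k unfolding f_def by simp
    hence "\<sigma> (int k) > 0" using brank_le_n[OF inS[OF k]] by simp
    thus ?thesis using \<open>f k = int k\<close> unfolding f_def brank_def by simp
  qed
  show ?thesis
  proof
    fix x :: int
    show "\<sigma> x = id x"
    proof (cases "x \<in> SS n")
      case False thus ?thesis using sp_out[OF \<sigma>] by simp
    next
      case True
      show ?thesis
      proof (cases "x > 0")
        case True
        thus ?thesis using fk[of "nat x"] \<open>x \<in> SS n\<close> by simp
      next
        case False
        hence "- x > 0" using True by auto
        hence "\<sigma> (- x) = - x" using fk[of "nat (- x)"] \<open>x \<in> SS n\<close> by simp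
        thus ?thesis using sp_odd[OF \<sigma>, of x] by simp
      qed
    qed
  qed
qed




definition Lam :: "nat \<Rightarrow> (int \<Rightarrow> int) \<times> (int \<Rightarrow> int) \<Rightarrow> int \<Rightarrow> int" where
  "Lam n pe x = (if x \<in> SS n then sgn x * snd pe \<bar>x\<bar> * fst pe \<bar>x\<bar> else x)"

definition Theta :: "nat \<Rightarrow> (int \<Rightarrow> int) \<Rightarrow> (int \<Rightarrow> int) \<times> (int \<Rightarrow> int)" where
  "Theta n \<sigma> = ((\<lambda>x. if x \<in> {1..int n} then \<bar>\<sigma> x\<bar> else x), restrict (\<lambda>x. sgn (\<sigma> x)) {1..int n})"

abbreviation PP where "PP n \<equiv> {p. p permutes {1..int n}}"
abbreviation EE where "EE n \<equiv> PiE {1..int n} (\<lambda>_. {-1, 1::int})"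

lemma abs_SS: "x \<in> SS n \<Longrightarrow> \<bar>x\<bar> \<in> {1..int n}" by auto
lemma pos_SS: "x \<in> {1..int n} \<Longrightarrow> x \<in> SS n" by auto

lemma Theta_fst_perm:
  assumes \<sigma>: "\<sigma> \<in> signed_perms n"
  shows "fst (Theta n \<sigma>) \<in> PP n"
proof -
  let ?p = "fst (Theta n \<sigma>)" and ?q = "fst (Theta n (inv \<sigma>))"
  have p: "?p x = \<bar>\<sigma> x\<bar>" if "x \<in> {1..int n}" for x using that by (simp add: Theta_def)
  have q: "?q x = \<bar>inv \<sigma> x\<bar>" if "x \<in> {1..int n}" for x using that by (simp add: Theta_def)
  have pin: "?p x \<in> {1..int n}" if "x \<in> {1..int n}" for x
    using p[OF that] abs_SS[OF sp_in[OF \<sigma> pos_SS[OF that]]] by simp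
  have qin: "?q x \<in> {1..int n}" if "x \<in> {1..int n}" for x
    using q[OF that] abs_SS[OF sp_in[OF sp_inv[OF \<sigma>] pos_SS[OF that]]] by simp
  have absinv: "\<bar>inv \<sigma> \<bar>y\<bar>\<bar> = \<bar>inv \<sigma> y\<bar>" for y
    using sp_odd[OF sp_inv[OF \<sigma>], of y] by (cases "y \<ge> 0") auto
  have absinv2: "\<bar>\<sigma> \<bar>y\<bar>\<bar> = \<bar>\<sigma> y\<bar>" for y
    using sp_odd[OF \<sigma>, of y] by (cases "y \<ge> 0") auto
  have qp: "?q (?p x) = x" if "x \<in> {1..int n}" for x
  proof -
    have "?q (?p x) = \<bar>inv \<sigma> \<bar>\<sigma> x\<bar>\<bar>" using q[OF pin[OF that]] p[OF that] by simp
    also have "\<dots> = \<bar>x\<bar>" using absinv \<sigma> by simp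
    finally show ?thesis using that by simp
  qed
  have pq: "?p (?q x) = x" if "x \<in> {1..int n}" for x
  proof -
    have "?p (?q x) = \<bar>\<sigma> \<bar>inv \<sigma> x\<bar>\<bar>" using p[OF qin[OF that]] q[OF that] by simp
    also have "\<dots> = \<bar>x\<bar>" using absinv2 \<sigma> by simp
    finally show ?thesis using that by simp
  qed
  have b: "bij_betw ?p {1..int n} {1..int n}"
    by (rule bij_betw_byWitness[where f'="?q"]) (use qp pq pin qin in auto)
  have out: "\<And>x. x \<notin> {1..int n} \<Longrightarrow> ?p x = x" by (auto simp: Theta_def)
  show ?thesis using bij_imp_permutes[OF b] out by blast
qed

lemma Theta_snd: "\<sigma> \<in> signed_perms n \<Longrightarrow> snd (Theta n \<sigma>) \<in> EE n"
proof -
  assume \<sigma>: "\<sigma> \<in> signed_perms n"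
  have "sgn (\<sigma> x) \<in> {-1, 1}" if "x \<in> {1..int n}" for x
    using sp_in[OF \<sigma> pos_SS[OF that]] by (auto simp: sgn_if)
  thus ?thesis by (auto simp: Theta_def)
qed

lemma Lam_sp:
  assumes p: "p \<in> PP n" and e: "e \<in> EE n"
  shows "Lam n (p, e) \<in> signed_perms n"
proof -
  have pe: "p y \<in> {1..int n}" if "y \<in> {1..int n}" for y using p that permutes_in_image by fastforce
  have ee: "e y \<in> {-1, 1}" if "y \<in> {1..int n}" for y using e that by (auto simp: PiE_iff)
  have L: "Lam n (p, e) x = sgn x * e \<bar>x\<bar> * p \<bar>x\<bar>" if "x \<in> SS n" for x using that by (simp add: Lam_def)
  have absL: "\<bar>Lam n (p, e) x\<bar> = p \<bar>x\<bar>" if "x \<in> SS n" for x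
    using L[OF that] pe[OF abs_SS[OF that]] ee[OF abs_SS[OF that]] that by (auto simp: abs_mult sgn_if)
  have sgnL: "sgn (Lam n (p, e) x) = sgn x * e \<bar>x\<bar>" if "x \<in> SS n" for x
    using L[OF that] pe[OF abs_SS[OF that]] ee[OF abs_SS[OF that]] that by (auto simp: sgn_mult sgn_if)
  have into: "Lam n (p, e) x \<in> SS n" if "x \<in> SS n" for x
    using absL[OF that] pe[OF abs_SS[OF that]] by simp
  have inj: "inj_on (Lam n (p, e)) (SS n)"
  proof (rule inj_onI)
    fix x y assume x: "x \<in> SS n" and y: "y \<in> SS n" and eq: "Lam n (p, e) x = Lam n (p, e) y"
    have "p \<bar>x\<bar> = p \<bar>y\<bar>" using absL[OF x] absL[OF y] eq by simp
    hence ab: "\<bar>x\<bar> = \<bar>y\<bar>" using permutes_inj[OF p[simplified]] by (simp add: inj_eq)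
    have "sgn x * e \<bar>x\<bar> = sgn y * e \<bar>y\<bar>" using sgnL[OF x] sgnL[OF y] eq by simp
    hence "sgn x = sgn y" using ab ee[OF abs_SS[OF x]] by auto
    moreover have "x = sgn x * \<bar>x\<bar>" "y = sgn y * \<bar>y\<bar>" by (simp_all add: sgn_mult_abs)
    ultimately show "x = y" using ab by simp
  qed
  have img: "Lam n (p, e) ` SS n = SS n"
    by (rule card_subset_eq) (use inj into in \<open>auto simp: card_image\<close>)
  have b: "bij_betw (Lam n (p, e)) (SS n) (SS n)" using inj img by (simp add: bij_betw_def)
  have out: "\<And>x. x \<notin> SS n \<Longrightarrow> Lam n (p, e) x = x" unfolding Lam_def by (simp only: if_not_P if_False)
  have perm: "Lam n (p, e) permutes SS n" using bij_imp_permutes[OF b] out by blast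
  have odd: "Lam n (p, e) (- x) = - Lam n (p, e) x" for x
    by (cases "x \<in> SS n") (auto simp: Lam_def)
  show ?thesis unfolding signed_perms_def using perm odd by blast
qed

lemma Lam_Theta: assumes \<sigma>: "\<sigma> \<in> signed_perms n" shows "Lam n (Theta n \<sigma>) = \<sigma>"
proof
  fix x show "Lam n (Theta n \<sigma>) x = \<sigma> x"
  proof (cases "x \<in> SS n")
    case False thus ?thesis using sp_out[OF \<sigma> False] unfolding Lam_def by (simp only: if_not_P if_False)
  next
    case True
    have ax: "\<bar>x\<bar> \<in> {1..int n}" using abs_SS[OF True] .
    have "Lam n (Theta n \<sigma>) x = sgn x * sgn (\<sigma> \<bar>x\<bar>) * \<bar>\<sigma> \<bar>x\<bar>\<bar>"
      using True ax by (simp add: Lam_def Theta_def)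
    also have "\<dots> = sgn x * \<sigma> \<bar>x\<bar>" by (simp add: mult.assoc sgn_mult_abs)
    also have "\<dots> = \<sigma> x" using sp_odd[OF \<sigma>, of x] True by (cases "x > 0") auto
    finally show ?thesis .
  qed
qed

lemma Theta_Lam:
  assumes p: "p \<in> PP n" and e: "e \<in> EE n"
  shows "Theta n (Lam n (p, e)) = (p, e)"
proof -
  have pe: "p y \<in> {1..int n}" if "y \<in> {1..int n}" for y using p that permutes_in_image by fastforce
  have ee: "e y \<in> {-1, 1}" if "y \<in> {1..int n}" for y using e that by (auto simp: PiE_iff)
  have 1: "fst (Theta n (Lam n (p, e))) = p"
  proof
    fix x show "fst (Theta n (Lam n (p, e))) x = p x"
    proof (cases "x \<in> {1..int n}")
      case True
      thus ?thesis using pe[OF True] ee[OF True] by (auto simp: Theta_def Lam_def abs_mult)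
    next
      case False
      thus ?thesis using permutes_not_in[OF p[simplified] False] False unfolding Theta_def by auto
    qed
  qed
  have 2: "snd (Theta n (Lam n (p, e))) = e"
  proof (rule PiE_ext[OF _ e])
    show "snd (Theta n (Lam n (p, e))) \<in> EE n" by (rule Theta_snd[OF Lam_sp[OF p e]])
  next
    fix x assume x: "x \<in> {1..int n}"
    thus "snd (Theta n (Lam n (p, e))) x = e x"
      using pe[OF x] ee[OF x] by (auto simp: Theta_def Lam_def sgn_mult)
  qed
  show ?thesis using 1 2 by (simp add: prod_eq_iff)
qed

lemma card_BB: "card (signed_perms n) = 2^n * fact n"
proof -
  have b: "bij_betw (Theta n) (signed_perms n) (PP n \<times> EE n)"
  proof (rule bij_betw_byWitness[where f'="Lam n"])
    show "\<forall>a\<in>signed_perms n. Lam n (Theta n a) = a" using Lam_Theta by blast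
    show "\<forall>a'\<in>PP n \<times> EE n. Theta n (Lam n a') = a'" using Theta_Lam by auto
    show "Theta n ` signed_perms n \<subseteq> PP n \<times> EE n"
    proof
      fix y assume "y \<in> Theta n ` signed_perms n"
      then obtain x where x: "x \<in> signed_perms n" "y = Theta n x" by blast
      show "y \<in> PP n \<times> EE n" unfolding mem_Times_iff x(2)
        using Theta_fst_perm[OF x(1)] Theta_snd[OF x(1)] by blast
    qed
    show "Lam n ` (PP n \<times> EE n) \<subseteq> signed_perms n" using Lam_sp by auto
  qed
  have "card (signed_perms n) = card (PP n \<times> EE n)" by (rule bij_betw_same_card[OF b])
  also have "\<dots> = card (PP n) * card (EE n)" by (rule card_cartesian_product)
  also have "card (PP n) = fact n" by (rule card_permutations) simp_all
  also have "card (EE n) = 2^n" by (simp add: card_PiE numeral_2_eq_2)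
  finally show ?thesis by simp
qed




definition Gset :: "nat \<Rightarrow> nat \<Rightarrow> (nat \<Rightarrow> int) set" where
  "Gset n b = PiE {1..n} (\<lambda>_. {- int b..int b})"
definition Xset :: "nat \<Rightarrow> nat \<Rightarrow> (nat \<Rightarrow> nat) set" where
  "Xset n b = PiE {1..n} (\<lambda>_. {0..2*b})"

lemma card_Gset: "card (Gset n b) = (2*b+1)^n"
proof -
  have "nat (2 * int b + 1) = 2*b+1" by simp
  thus ?thesis by (simp add: Gset_def card_PiE)
qed
lemma card_Xset: "card (Xset n b) = (2*b+1)^n"
  by (simp add: Xset_def card_PiE)
lemma finite_Gset[simp]: "finite (Gset n b)"
  by (simp add: Gset_def finite_PiE)
lemma finite_Xset[simp]: "finite (Xset n b)"
  by (simp add: Xset_def finite_PiE)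

definition Gx :: "nat \<Rightarrow> nat \<Rightarrow> (nat \<Rightarrow> int) \<Rightarrow> nat \<Rightarrow> int" where
  "Gx n b g k = ext n g k + int b"

definition Phi :: "nat \<Rightarrow> nat \<Rightarrow> (nat \<Rightarrow> bool) \<Rightarrow> (nat \<Rightarrow> int) \<Rightarrow> nat \<Rightarrow> nat" where
  "Phi n b \<delta> g = restrict (\<lambda>k. nat ((Gx n b g k - Gx n b g (Suc k) - of_bool (\<delta> k)) mod (2 * int b + 1))) {1..n}"

lemma Phi_in: "Phi n b \<delta> g \<in> Xset n b"
proof -
  have "nat (v mod (2 * int b + 1)) \<le> 2 * b" for v :: int
  proof -
    have "v mod (2 * int b + 1) < 2 * int b + 1" by (rule pos_mod_bound) simp
    hence "v mod (2 * int b + 1) \<le> int (2 * b)" by simp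
    thus ?thesis by (simp add: nat_le_iff)
  qed
  thus ?thesis unfolding Phi_def Xset_def by auto
qed

lemma Gx_range: assumes "g \<in> Gset n b" "1 \<le> k" shows "0 \<le> Gx n b g k \<and> Gx n b g k \<le> 2 * int b"
proof (cases "k \<le> n")
  case True
  hence "g k \<in> {- int b..int b}" using assms unfolding Gset_def by (auto simp: PiE_iff)
  thus ?thesis using True by (simp add: Gx_def ext_def)
qed (simp add: Gx_def ext_def)

lemma card_filter_int: "finite A \<Longrightarrow> int (card {x \<in> A. P x}) = (\<Sum>x\<in>A. (of_bool (P x) :: int))"
proof -
  assume "finite A"
  have "int (card {x \<in> A. P x}) = (\<Sum>x\<in>{x \<in> A. P x}. 1)" by simp
  also have "\<dots> = (\<Sum>x\<in>A. if P x then 1 else 0)" by (rule sum.inter_filter[OF \<open>finite A\<close>])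
  finally show ?thesis by (simp add: of_bool_def)
qed

lemma Phi_val:
  assumes g: "g \<in> Gset n b" and k: "1 \<le> k" "k \<le> n"
  shows "int (Phi n b \<delta> g k) = Gx n b g k - Gx n b g (Suc k) - of_bool (\<delta> k)
           + (2 * int b + 1) * of_bool (evt n g \<delta> k)"
proof -
  let ?v = "Gx n b g k - Gx n b g (Suc k) - of_bool (\<delta> k)"
  let ?m = "2 * int b + 1"
  have r1: "0 \<le> Gx n b g k \<and> Gx n b g k \<le> 2 * int b" using Gx_range[OF g k(1)] .
  have r2: "0 \<le> Gx n b g (Suc k) \<and> Gx n b g (Suc k) \<le> 2 * int b" using Gx_range[OF g, of "Suc k"] by simp
  have ev: "evt n g \<delta> k \<longleftrightarrow> ?v < 0" by (auto simp: evt_def Gx_def)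
  have "?v mod ?m = ?v + ?m * of_bool (?v < 0)"
  proof (cases "?v < 0")
    case True
    have "(?v + ?m) mod ?m = ?v + ?m" by (rule mod_pos_pos_trivial) (use r1 r2 True in auto)
    thus ?thesis using True by simp
  next
    case False
    have "?v mod ?m = ?v" by (rule mod_pos_pos_trivial) (use r1 r2 False in auto)
    thus ?thesis using False by simp
  qed
  note B = this
  have A: "int (Phi n b \<delta> g k) = ?v mod ?m" using k unfolding Phi_def by simp
  have C: "(of_bool (?v < 0) :: int) = of_bool (evt n g \<delta> k)" using ev by simp
  have "int (Phi n b \<delta> g k) = ?v + ?m * of_bool (?v < 0)" using A B by simp
  also have "\<dots> = ?v + ?m * of_bool (evt n g \<delta> k)" by (simp only: C)
  finally show ?thesis .
qed

lemma sum_Phi: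
  assumes g: "g \<in> Gset n b"
  shows "int (card {k \<in> {1..n}. \<delta> k} + b + sum (Phi n b \<delta> g) {1..n})
       = Gx n b g 1 + (2 * int b + 1) * int (card {k \<in> {1..n}. evt n g \<delta> k})"
proof -
  let ?m = "2 * int b + 1"
  have "int (sum (Phi n b \<delta> g) {1..n}) = (\<Sum>k=1..n. int (Phi n b \<delta> g k))" by simp
  also have "\<dots> = (\<Sum>k=1..n. (Gx n b g k - Gx n b g (Suc k)) - of_bool (\<delta> k)
           + ?m * of_bool (evt n g \<delta> k))"
    by (rule sum.cong) (auto simp: Phi_val[OF g])
  also have "\<dots> = (\<Sum>k=1..n. Gx n b g k - Gx n b g (Suc k)) - (\<Sum>k=1..n. of_bool (\<delta> k))
           + ?m * (\<Sum>k=1..n. of_bool (evt n g \<delta> k))"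
    by (simp add: sum.distrib sum_subtractf sum_distrib_left)
  also have "(\<Sum>k=1..n. Gx n b g k - Gx n b g (Suc k)) = Gx n b g 1 - Gx n b g (Suc n)"
  proof -
    have "(\<Sum>k=1..n. Gx n b g (Suc k) - Gx n b g k) = Gx n b g (Suc n) - Gx n b g 1"
      by (rule sum_Suc_diff) simp
    hence "- (\<Sum>k=1..n. Gx n b g (Suc k) - Gx n b g k) = Gx n b g 1 - Gx n b g (Suc n)" by simp
    thus ?thesis by (simp add: sum_negf[symmetric])
  qed
  also have "Gx n b g (Suc n) = int b" by (simp add: Gx_def ext_def)
  also have "(\<Sum>k=1..n. (of_bool (\<delta> k) :: int)) = int (card {k \<in> {1..n}. \<delta> k})"
    by (rule card_filter_int[symmetric]) simp
  also have "(\<Sum>k=1..n. (of_bool (evt n g \<delta> k) :: int)) = int (card {k \<in> {1..n}. evt n g \<delta> k})"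
    by (rule card_filter_int[symmetric]) simp
  finally show ?thesis by simp
qed

lemma stat_div:
  assumes g: "g \<in> Gset n b"
  shows "card {k \<in> {1..n}. evt n g \<delta> k} = (card {k \<in> {1..n}. \<delta> k} + b + sum (Phi n b \<delta> g) {1..n}) div (2*b+1)"
proof -
  let ?s = "card {k \<in> {1..n}. evt n g \<delta> k}"
  let ?N = "card {k \<in> {1..n}. \<delta> k} + b + sum (Phi n b \<delta> g) {1..n}"
  have e: "int ?N = Gx n b g 1 + (2 * int b + 1) * int ?s" by (rule sum_Phi[OF g])
  have r: "0 \<le> Gx n b g 1 \<and> Gx n b g 1 \<le> 2 * int b" using Gx_range[OF g, of 1] by simp
  have "int ?N div (2 * int b + 1) = int ?s"
    unfolding e using r by (simp add: add.commute div_add_self2 div_pos_pos_trivial)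
  moreover have "int (?N div (2*b+1)) = int ?N div int (2*b+1)" by (rule zdiv_int)
  moreover have "int (2*b+1) = 2 * int b + 1" by simp
  ultimately have "int (?N div (2*b+1)) = int ?s" by metis
  thus ?thesis by simp
qed

lemma Phi_inj: "inj_on (Phi n b \<delta>) (Gset n b)"
proof (rule inj_onI)
  fix g g' assume g: "g \<in> Gset n b" and g': "g' \<in> Gset n b" and eq: "Phi n b \<delta> g = Phi n b \<delta> g'"
  let ?m = "2 * int b + 1"
  have main: "t \<le> n \<Longrightarrow> Gx n b g (n + 1 - t) = Gx n b g' (n + 1 - t)" for t
  proof (induction t)
    case 0 thus ?case by (simp add: Gx_def ext_def)
  next
    case (Suc t)
    define k where "k = n - t"
    have k: "1 \<le> k" "k \<le> n" "Suc k = n + 1 - t" "n + 1 - Suc t = k" using Suc.prems by (auto simp: k_def)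
    have IH: "Gx n b g (Suc k) = Gx n b g' (Suc k)" using Suc k by simp
    have "int (Phi n b \<delta> g k) = int (Phi n b \<delta> g' k)" using eq by simp
    hence "(Gx n b g k - Gx n b g (Suc k) - of_bool (\<delta> k)) mod ?m
         = (Gx n b g' k - Gx n b g' (Suc k) - of_bool (\<delta> k)) mod ?m"
      using k unfolding Phi_def by simp
    hence "(Gx n b g k - Gx n b g (Suc k) - of_bool (\<delta> k) + (Gx n b g (Suc k) + of_bool (\<delta> k))) mod ?m
         = (Gx n b g' k - Gx n b g' (Suc k) - of_bool (\<delta> k) + (Gx n b g (Suc k) + of_bool (\<delta> k))) mod ?m"
      by (rule mod_add_cong) simp
    hence "Gx n b g k mod ?m = Gx n b g' k mod ?m" using IH by simp
    moreover have "Gx n b g k mod ?m = Gx n b g k" using Gx_range[OF g k(1)] by (intro mod_pos_pos_trivial) auto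
    moreover have "Gx n b g' k mod ?m = Gx n b g' k" using Gx_range[OF g' k(1)] by (intro mod_pos_pos_trivial) auto
    ultimately show ?case using k by simp
  qed
  show "g = g'"
  proof (rule PiE_ext[OF g[unfolded Gset_def] g'[unfolded Gset_def]])
    fix k assume "k \<in> {1..n}"
    hence "n + 1 - (n + 1 - k) = k" "n + 1 - k \<le> n" by auto
    hence "Gx n b g k = Gx n b g' k" using main[of "n + 1 - k"] by simp
    thus "g k = g' k" using \<open>k \<in> {1..n}\<close> by (simp add: Gx_def ext_def)
  qed
qed

lemma Phi_image: "Phi n b \<delta> ` Gset n b = Xset n b"
  by (rule card_subset_eq) (auto simp: Phi_in card_image[OF Phi_inj] card_Gset card_Xset)

lemma carries_count:
  "card {g \<in> Gset n b. card {k \<in> {1..n}. evt n g \<delta> k} = i}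
   = card {X \<in> Xset n b. (card {k \<in> {1..n}. \<delta> k} + b + sum X {1..n}) div (2*b+1) = i}"
proof -
  let ?P = "\<lambda>X. (card {k \<in> {1..n}. \<delta> k} + b + sum X {1..n}) div (2*b+1) = i"
  have 1: "{g \<in> Gset n b. card {k \<in> {1..n}. evt n g \<delta> k} = i} = {g \<in> Gset n b. ?P (Phi n b \<delta> g)}"
    using stat_div by auto
  have 2: "card {g \<in> Gset n b. ?P (Phi n b \<delta> g)} = card (Phi n b \<delta> ` {g \<in> Gset n b. ?P (Phi n b \<delta> g)})"
    by (rule card_image[symmetric]) (rule inj_on_subset[OF Phi_inj], auto)
  have 3: "Phi n b \<delta> ` {g \<in> Gset n b. ?P (Phi n b \<delta> g)} = {X \<in> Phi n b \<delta> ` Gset n b. ?P X}"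
    by blast
  show ?thesis unfolding 1 2 3 Phi_image ..
qed




lemma card_PiE_insert_filter:
  assumes "a \<notin> S" "finite S" "\<And>i. finite (T i)"
  shows "card {X \<in> PiE (insert a S) T. P X} = (\<Sum>v\<in>T a. card {Y \<in> PiE S T. P (Y(a := v))})"
proof -
  let ?f = "\<lambda>(v, Y). Y(a := v)"
  let ?A = "SIGMA v:T a. {Y \<in> PiE S T. P (Y(a := v))}"
  have "{X \<in> PiE (insert a S) T. P X} = ?f ` ?A"
  proof (intro equalityI subsetI)
    fix X assume X: "X \<in> {X \<in> PiE (insert a S) T. P X}"
    let ?Y = "X(a := undefined)"
    have "?Y \<in> PiE S T" using X assms(1) by (auto simp: PiE_iff extensional_def)
    moreover have "?Y(a := X a) = X" by simp
    moreover have "X a \<in> T a" using X by (auto simp: PiE_iff)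
    ultimately show "X \<in> ?f ` ?A" using X by (auto intro!: image_eqI[where x="(X a, ?Y)"])
  next
    fix X assume "X \<in> ?f ` ?A"
    then obtain v Y where "X = Y(a := v)" "v \<in> T a" "Y \<in> PiE S T" "P (Y(a := v))" by auto
    thus "X \<in> {X \<in> PiE (insert a S) T. P X}" by (auto simp: PiE_iff extensional_def)
  qed
  moreover have "inj_on ?f ?A"
  proof (rule inj_onI, clarify)
    fix v Y v' Y'
    assume A: "v \<in> T a" "Y \<in> PiE S T" "v' \<in> T a" "Y' \<in> PiE S T" and eq: "Y(a := v) = Y'(a := v')"
    have "v = v'" using fun_cong[OF eq, of a] by simp
    moreover have "Y = Y'"
    proof
      fix x show "Y x = Y' x"
      proof (cases "x = a")
        case True thus ?thesis using A assms(1) by (auto simp: PiE_iff extensional_def)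
      next
        case False thus ?thesis using fun_cong[OF eq, of x] by simp
      qed
    qed
    ultimately show "v = v' \<and> Y = Y'" by simp
  qed
  ultimately have "card {X \<in> PiE (insert a S) T. P X} = card ?A" by (simp add: card_image)
  also have "\<dots> = (\<Sum>v\<in>T a. card {Y \<in> PiE S T. P (Y(a := v))})"
    by (rule card_SigmaI) (use assms in \<open>auto intro: finite_subset[OF _ finite_PiE[of S T]]\<close>)
  finally show ?thesis .
qed

lemma hockey: "(\<Sum>w\<le>M. (w + n) choose n) = (M + Suc n) choose Suc n"
  by (induction M) simp_all

lemma stars_bars:
  "M \<le> N \<Longrightarrow> card {X \<in> PiE {1..n} (\<lambda>_. {0..N::nat}). sum X {1..n} \<le> M} = (M + n) choose n"
proof (induction n arbitrary: M)
  case 0 thus ?case by simp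
next
  case (Suc n)
  have ins: "{1..Suc n} = insert (Suc n) {1..n}" by auto
  have "card {X \<in> PiE {1..Suc n} (\<lambda>_. {0..N}). sum X {1..Suc n} \<le> M}
      = (\<Sum>v\<in>{0..N}. card {Y \<in> PiE {1..n} (\<lambda>_. {0..N}). sum (Y(Suc n := v)) {1..Suc n} \<le> M})"
    unfolding ins by (rule card_PiE_insert_filter) auto
  also have "\<dots> = (\<Sum>v\<in>{0..N}. card {Y \<in> PiE {1..n} (\<lambda>_. {0..N}). v + sum Y {1..n} \<le> M})"
  proof (rule sum.cong[OF refl])
    fix v
    have "sum (Y(Suc n := v)) {1..Suc n} = v + sum Y {1..n}" for Y :: "nat \<Rightarrow> nat"
    proof -
      have "sum (Y(Suc n := v)) {1..Suc n} = (Y(Suc n := v)) (Suc n) + sum (Y(Suc n := v)) {1..n}"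
        unfolding ins by (rule sum.insert) auto
      also have "sum (Y(Suc n := v)) {1..n} = sum Y {1..n}" by (rule sum.cong) auto
      finally show ?thesis by simp
    qed
    thus "card {Y \<in> PiE {1..n} (\<lambda>_. {0..N}). sum (Y(Suc n := v)) {1..Suc n} \<le> M}
        = card {Y \<in> PiE {1..n} (\<lambda>_. {0..N}). v + sum Y {1..n} \<le> M}" by (simp add: add.commute)
  qed
  also have "\<dots> = (\<Sum>v\<in>{0..M}. card {Y \<in> PiE {1..n} (\<lambda>_. {0..N}). sum Y {1..n} \<le> M - v})"
  proof -
    have "(\<Sum>v\<in>{0..N}. card {Y \<in> PiE {1..n} (\<lambda>_. {0..N}). v + sum Y {1..n} \<le> M})
        = (\<Sum>v\<in>{0..M}. card {Y \<in> PiE {1..n} (\<lambda>_. {0..N}). v + sum Y {1..n} \<le> M})"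
      by (rule sum.mono_neutral_right) (use Suc.prems in auto)
    also have "\<dots> = (\<Sum>v\<in>{0..M}. card {Y \<in> PiE {1..n} (\<lambda>_. {0..N}). sum Y {1..n} \<le> M - v})"
      by (rule sum.cong) (auto intro!: arg_cong[where f=card])
    finally show ?thesis .
  qed
  also have "\<dots> = (\<Sum>v\<in>{0..M}. (M - v + n) choose n)"
    by (rule sum.cong) (use Suc in auto)
  also have "\<dots> = (\<Sum>w\<le>M. (w + n) choose n)"
  proof -
    have "(\<Sum>v\<in>{0..M}. (M - v + n) choose n) = (\<Sum>w\<in>{0..M}. (w + n) choose n)"
      by (rule sum.reindex_bij_witness[where i="\<lambda>w. M - w" and j="\<lambda>v. M - v"]) auto
    thus ?thesis by (simp add: atMost_atLeast0)
  qed
  also have "\<dots> = (M + Suc n) choose Suc n" by (rule hockey)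
  finally show ?case by simp
qed

lemma stars_bars_carries:
  assumes "n \<ge> 1"
  shows "card {X \<in> Xset n b. (d + b + sum X {1..n}) div (2*b+1) = 0} = (n + b - d) choose n"
proof (cases "d \<le> b")
  case True
  have "{X \<in> Xset n b. (d + b + sum X {1..n}) div (2*b+1) = 0}
      = {X \<in> PiE {1..n} (\<lambda>_. {0..2*b}). sum X {1..n} \<le> b - d}"
    using True by (auto simp: Xset_def div_eq_0_iff)
  also have "card \<dots> = (b - d + n) choose n" by (rule stars_bars) simp
  finally show ?thesis using True by (simp add: add.commute)
next
  case False
  hence "{X \<in> Xset n b. (d + b + sum X {1..n}) div (2*b+1) = 0} = {}"
    by (auto simp: div_eq_0_iff)
  moreover have "(n + b - d) choose n = 0" using False \<open>n \<ge> 1\<close> by simp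
  ultimately show ?thesis by (simp only: card.empty)
qed




definition Gam :: "nat \<Rightarrow> (int \<Rightarrow> int) \<Rightarrow> (nat \<Rightarrow> int) \<Rightarrow> nat \<Rightarrow> int" where
  "Gam n \<rho> h = restrict (\<lambda>k. hodd h (\<rho> (int k))) {1..n}"

lemma hodd_range:
  assumes h: "h \<in> Gset n b" and y: "y \<in> SS n"
  shows "hodd h y \<in> {- int b..int b}"
proof (cases "y > 0")
  case True
  hence "nat y \<in> {1..n}" using y by auto
  hence "h (nat y) \<in> {- int b..int b}" using h by (auto simp: Gset_def PiE_iff)
  thus ?thesis using True by (simp add: hodd_def)
next
  case False
  hence "y < 0" using y by auto
  hence "nat (- y) \<in> {1..n}" using y by auto
  hence "h (nat (- y)) \<in> {- int b..int b}" using h by (auto simp: Gset_def PiE_iff)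
  thus ?thesis using \<open>y < 0\<close> by (auto simp: hodd_def)
qed

lemma Gam_in: "\<rho> \<in> signed_perms n \<Longrightarrow> h \<in> Gset n b \<Longrightarrow> Gam n \<rho> h \<in> Gset n b"
  unfolding Gam_def using hodd_range sp_in int_SS by (auto simp: Gset_def)

lemma Gam_inj: assumes \<rho>: "\<rho> \<in> signed_perms n" shows "inj_on (Gam n \<rho>) (Gset n b)"
proof (rule inj_onI)
  fix h h' assume h: "h \<in> Gset n b" and h': "h' \<in> Gset n b" and eq: "Gam n \<rho> h = Gam n \<rho> h'"
  have e: "hodd h (\<rho> (int k)) = hodd h' (\<rho> (int k))" if "k \<in> {1..n}" for k
    using fun_cong[OF eq, of k] that by (simp add: Gam_def)
  show "h = h'"
  proof (rule PiE_ext[OF h[unfolded Gset_def] h'[unfolded Gset_def]])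
    fix x assume x: "x \<in> {1..n}"
    define y where "y = inv \<rho> (int x)"
    have yS: "y \<in> SS n" unfolding y_def using sp_in[OF sp_inv[OF \<rho>] int_SS] x by auto
    have ry: "\<rho> y = int x" unfolding y_def using \<rho> by simp
    show "h x = h' x"
    proof (cases "y > 0")
      case True
      have "nat y \<in> {1..n}" using yS True by auto
      hence "hodd h (\<rho> (int (nat y))) = hodd h' (\<rho> (int (nat y)))" by (rule e)
      thus ?thesis using True ry x by (simp add: hodd_def)
    next
      case False
      hence "y < 0" using yS by auto
      hence "nat (- y) \<in> {1..n}" using yS by auto
      hence "hodd h (\<rho> (int (nat (- y)))) = hodd h' (\<rho> (int (nat (- y))))" by (rule e)
      moreover have "\<rho> (int (nat (- y))) = - int x" using \<open>y < 0\<close> sp_odd[OF \<rho>, of y] ry by simp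
      ultimately show ?thesis using x by (simp add: hodd_def)
    qed
  qed
qed

lemma Gam_image: "\<rho> \<in> signed_perms n \<Longrightarrow> Gam n \<rho> ` Gset n b = Gset n b"
  by (rule card_subset_eq) (auto simp: Gam_in card_image[OF Gam_inj])

lemma evt_Gam: "1 \<le> k \<Longrightarrow> evt n (Gam n \<rho> h) \<delta> k = evt n (\<lambda>k. hodd h (\<rho> (int k))) \<delta> k"
  unfolding evt_def ext_def Gam_def by auto

lemma bdes_phi_Gam:
  assumes "n \<ge> 1" "\<rho> \<in> signed_perms n"
  shows "bdes n (phi n h \<circ> \<rho>) = card {k \<in> {1..n}. evt n (Gam n \<rho> h) (dd n \<rho>) k}"
  unfolding bdes_phi[OF assms] using evt_Gam by (metis (no_types, lifting) atLeastAtMost_iff)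

lemma count_bdes:
  assumes n: "n \<ge> 1" and \<rho>: "\<rho> \<in> signed_perms n"
  shows "card {h \<in> Gset n b. bdes n (phi n h \<circ> \<rho>) = i}
       = card {X \<in> Xset n b. (bdes n \<rho> + b + sum X {1..n}) div (2*b+1) = i}"
proof -
  let ?P = "\<lambda>g. card {k \<in> {1..n}. evt n g (dd n \<rho>) k} = i"
  have 1: "{h \<in> Gset n b. bdes n (phi n h \<circ> \<rho>) = i} = {h \<in> Gset n b. ?P (Gam n \<rho> h)}"
    using bdes_phi_Gam[OF n \<rho>] by auto
  have 2: "card {h \<in> Gset n b. ?P (Gam n \<rho> h)} = card (Gam n \<rho> ` {h \<in> Gset n b. ?P (Gam n \<rho> h)})"
    by (rule card_image[symmetric]) (rule inj_on_subset[OF Gam_inj[OF \<rho>]], auto)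
  have 3: "Gam n \<rho> ` {h \<in> Gset n b. ?P (Gam n \<rho> h)} = {g \<in> Gam n \<rho> ` Gset n b. ?P g}"
    by blast
  have 4: "card {g \<in> Gset n b. ?P g} = card {X \<in> Xset n b. (bdes n \<rho> + b + sum X {1..n}) div (2*b+1) = i}"
    unfolding bdes_eq[OF n] by (rule carries_count)
  show ?thesis unfolding 1 2 3 Gam_image[OF \<rho>] 4 ..
qed

lemma fiber_count:
  assumes n: "n \<ge> 1" and \<psi>: "\<psi> \<in> signed_perms n"
  shows "card {h \<in> Gset n b. phi n h = \<psi>} = (n + b - bdes n (inv \<psi>)) choose n"
proof -
  have 1: "{h \<in> Gset n b. phi n h = \<psi>} = {h \<in> Gset n b. bdes n (phi n h \<circ> inv \<psi>) = 0}"
  proof (intro Collect_cong conj_cong refl)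
    fix h
    have sp: "phi n h \<circ> inv \<psi> \<in> signed_perms n" using sp_comp[OF phi_sp sp_inv[OF \<psi>]] .
    show "phi n h = \<psi> \<longleftrightarrow> bdes n (phi n h \<circ> inv \<psi>) = 0"
    proof
      assume "phi n h = \<psi>"
      hence "phi n h \<circ> inv \<psi> = id" using \<psi> by (auto simp: fun_eq_iff)
      thus "bdes n (phi n h \<circ> inv \<psi>) = 0" using bdes_id[OF n] by simp
    next
      assume "bdes n (phi n h \<circ> inv \<psi>) = 0"
      hence "phi n h \<circ> inv \<psi> = id" using bdes0[OF n sp] by simp
      hence "(phi n h \<circ> inv \<psi>) \<circ> \<psi> = \<psi>" by simp
      thus "phi n h = \<psi>" using \<psi> by (simp add: fun_eq_iff o_def)
    qed
  qed
  show ?thesis unfolding 1 count_bdes[OF n sp_inv[OF \<psi>]] by (rule stars_bars_carries[OF n])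
qed

lemma master:
  fixes F :: "(int \<Rightarrow> int) \<Rightarrow> real"
  assumes n: "n \<ge> 1"
  shows "(\<Sum>h\<in>Gset n b. F (phi n h))
       = (\<Sum>\<nu>\<in>signed_perms n. real ((n + b - bdes n \<nu>) choose n) * F (inv \<nu>))"
proof -
  have "(\<Sum>h\<in>Gset n b. F (phi n h)) = (\<Sum>\<psi>\<in>signed_perms n. \<Sum>h\<in>{h \<in> Gset n b. phi n h = \<psi>}. F (phi n h))"
    by (rule sum.group[symmetric]) (auto simp: phi_sp)
  also have "\<dots> = (\<Sum>\<psi>\<in>signed_perms n. real (card {h \<in> Gset n b. phi n h = \<psi>}) * F \<psi>)"
    by (rule sum.cong) auto
  also have "\<dots> = (\<Sum>\<psi>\<in>signed_perms n. real ((n + b - bdes n (inv \<psi>)) choose n) * F \<psi>)"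
    by (rule sum.cong) (auto simp: fiber_count[OF n])
  also have "\<dots> = (\<Sum>\<nu>\<in>signed_perms n. real ((n + b - bdes n \<nu>) choose n) * F (inv \<nu>))"
    by (rule sum.reindex_bij_witness[where i=inv and j=inv]) (auto simp: sp_inv)
  finally show ?thesis .
qed

lemma L1:
  assumes n: "n \<ge> 1" and \<rho>: "\<rho> \<in> signed_perms n"
  shows "(\<Sum>\<nu>\<in>signed_perms n. real ((n + b - bdes n \<nu>) choose n) * of_bool (bdes n (inv \<nu> \<circ> \<rho>) = i))
       = real (card {X \<in> Xset n b. (bdes n \<rho> + b + sum X {1..n}) div (2*b+1) = i})"
proof -
  have "(\<Sum>\<nu>\<in>signed_perms n. real ((n + b - bdes n \<nu>) choose n) * of_bool (bdes n (inv \<nu> \<circ> \<rho>) = i))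
      = (\<Sum>h\<in>Gset n b. (of_bool (bdes n (phi n h \<circ> \<rho>) = i) :: real))"
    using master[OF n, of "\<lambda>\<psi>. of_bool (bdes n (\<psi> \<circ> \<rho>) = i)" b] by simp
  also have "\<dots> = real (card {h \<in> Gset n b. bdes n (phi n h \<circ> \<rho>) = i})"
    by (simp add: sum.If_cases Int_def conj_commute)
  also have "\<dots> = real (card {X \<in> Xset n b. (bdes n \<rho> + b + sum X {1..n}) div (2*b+1) = i})"
    using count_bdes[OF n \<rho>] by simp
  finally show ?thesis .
qed

lemma total_weight:
  assumes n: "n \<ge> 1"
  shows "(\<Sum>\<nu>\<in>signed_perms n. real ((n + b - bdes n \<nu>) choose n)) = real ((2*b+1)^n)"
  using master[OF n, of "\<lambda>_. 1" b] by (simp add: card_Gset)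




abbreviation BB where "BB n \<equiv> signed_perms n"

lemma comp_inv_cancel: "\<tau> \<in> BB n \<Longrightarrow> inv \<tau> \<circ> (\<tau> \<circ> \<nu>) = \<nu>"
  by (simp add: fun_eq_iff)
lemma comp_inv_cancel2: "\<tau> \<in> BB n \<Longrightarrow> \<tau> \<circ> (inv \<tau> \<circ> \<nu>) = \<nu>"
  by (simp add: fun_eq_iff)

lemma eulerB_inv: "eulerB n j = card {\<tau> \<in> BB n. bdes n (inv \<tau>) = j}"
proof -
  have img: "inv ` {\<tau> \<in> BB n. bdes n (inv \<tau>) = j} = {\<sigma> \<in> BB n. bdes n \<sigma> = j}"
  proof (intro equalityI subsetI)
    fix x assume "x \<in> inv ` {\<tau> \<in> BB n. bdes n (inv \<tau>) = j}"
    thus "x \<in> {\<sigma> \<in> BB n. bdes n \<sigma> = j}" using sp_inv by auto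
  next
    fix x assume x: "x \<in> {\<sigma> \<in> BB n. bdes n \<sigma> = j}"
    hence "inv x \<in> {\<tau> \<in> BB n. bdes n (inv \<tau>) = j}" using sp_inv by auto
    moreover have "x = inv (inv x)" using x sp_inv_inv[of x n] by simp
    ultimately show "x \<in> inv ` {\<tau> \<in> BB n. bdes n (inv \<tau>) = j}" by blast
  qed
  have inj: "inj_on inv {\<tau> \<in> BB n. bdes n (inv \<tau>) = j}"
  proof (rule inj_onI)
    fix x y assume x: "x \<in> {\<tau> \<in> BB n. bdes n (inv \<tau>) = j}" and y: "y \<in> {\<tau> \<in> BB n. bdes n (inv \<tau>) = j}"
      and e: "inv x = inv y"
    have xB: "x \<in> BB n" using x by simp
    have "x = inv (inv x)" by (rule sp_inv_inv[OF xB, symmetric])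
    also have "\<dots> = inv (inv y)" by (simp only: e)
    also have "\<dots> = y" using sp_inv_inv[of y n] y by (simp only: mem_Collect_eq)
    finally show "x = y" .
  qed
  have c: "card (inv ` {\<tau> \<in> BB n. bdes n (inv \<tau>) = j}) = card {\<tau> \<in> BB n. bdes n (inv \<tau>) = j}"
    by (rule card_image[OF inj])
  show ?thesis unfolding eulerB_def img[symmetric] c ..
qed

lemma W_sum:
  assumes n: "n \<ge> 1" and t': "\<tau>' \<in> BB n"
  shows "(\<Sum>\<tau>\<in>BB n. of_bool (bdes n (inv \<tau>) = i) * shuffleB n b (inv \<tau> \<circ> \<tau>'))
       = real (card {X \<in> Xset n b. (bdes n (inv \<tau>') + b + sum X {1..n}) div (2*b+1) = i}) / real (2*b+1)^n"
proof -
  have "(\<Sum>\<tau>\<in>BB n. of_bool (bdes n (inv \<tau>) = i) * shuffleB n b (inv \<tau> \<circ> \<tau>'))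
      = (\<Sum>\<nu>\<in>BB n. of_bool (bdes n (inv (\<tau>' \<circ> \<nu>)) = i) * shuffleB n b (inv (\<tau>' \<circ> \<nu>) \<circ> \<tau>'))"
    by (rule sum.reindex_bij_witness[where i="\<lambda>\<nu>. \<tau>' \<circ> \<nu>" and j="\<lambda>\<tau>. inv \<tau>' \<circ> \<tau>"])
       (use t' in \<open>auto simp: sp_comp sp_inv comp_inv_cancel comp_inv_cancel2\<close>)
  also have "\<dots> = (\<Sum>\<nu>\<in>BB n. real ((n + b - bdes n \<nu>) choose n) * of_bool (bdes n (inv \<nu> \<circ> inv \<tau>') = i))
                   / real (2*b+1)^n"
    unfolding sum_divide_distrib
  proof (rule sum.cong[OF refl])
    fix \<nu> assume \<nu>: "\<nu> \<in> BB n"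
    have 1: "inv (\<tau>' \<circ> \<nu>) = inv \<nu> \<circ> inv \<tau>'" by (rule sp_inv_comp[OF t' \<nu>])
    have 2: "inv (inv \<nu> \<circ> inv \<tau>' \<circ> \<tau>') = \<nu>"
    proof -
      have "inv \<nu> \<circ> inv \<tau>' \<circ> \<tau>' = inv \<nu>" using t' by (simp add: fun_eq_iff)
      thus ?thesis using \<nu> by simp
    qed
    show "of_bool (bdes n (inv (\<tau>' \<circ> \<nu>)) = i) * shuffleB n b (inv (\<tau>' \<circ> \<nu>) \<circ> \<tau>')
        = real ((n + b - bdes n \<nu>) choose n) * of_bool (bdes n (inv \<nu> \<circ> inv \<tau>') = i) / real (2*b+1)^n"
      unfolding 1 shuffleB_def 2 by simp
  qed
  also have "\<dots> = real (card {X \<in> Xset n b. (bdes n (inv \<tau>') + b + sum X {1..n}) div (2*b+1) = i}) / real (2*b+1)^n"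
    using L1[OF n sp_inv[OF t'], of b i] by simp
  finally show ?thesis .
qed




lemma sum_PiE_insert:
  fixes f :: "('a \<Rightarrow> 'b) \<Rightarrow> real"
  assumes "a \<notin> S" "finite S" "\<And>i. finite (T i)"
  shows "(\<Sum>X\<in>PiE (insert a S) T. f X) = (\<Sum>v\<in>T a. \<Sum>Y\<in>PiE S T. f (Y(a := v)))"
proof -
  have inj: "inj_on (\<lambda>(y, g). g(a := y)) (T a \<times> PiE S T)"
  proof (rule inj_onI, clarify)
    fix v Y v' Y'
    assume A: "v \<in> T a" "Y \<in> PiE S T" "v' \<in> T a" "Y' \<in> PiE S T" and eq: "Y(a := v) = Y'(a := v')"
    have "v = v'" using fun_cong[OF eq, of a] by simp
    moreover have "Y = Y'"
    proof
      fix x show "Y x = Y' x"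
      proof (cases "x = a")
        case True thus ?thesis using A assms(1) by (auto simp: PiE_iff extensional_def)
      next
        case False thus ?thesis using fun_cong[OF eq, of x] by simp
      qed
    qed
    ultimately show "v = v' \<and> Y = Y'" by simp
  qed
  have "(\<Sum>X\<in>PiE (insert a S) T. f X) = (\<Sum>X\<in>(\<lambda>(y, g). g(a := y)) ` (T a \<times> PiE S T). f X)"
    by (simp only: PiE_insert_eq)
  also have "\<dots> = (\<Sum>(v, Y)\<in>T a \<times> PiE S T. f (Y(a := v)))"
    by (subst sum.reindex[OF inj]) (simp add: case_prod_unfold)
  also have "\<dots> = (\<Sum>v\<in>T a. \<Sum>Y\<in>PiE S T. f (Y(a := v)))"
    by (rule sum.cartesian_product[symmetric])
  finally show ?thesis .
qed

lemma sp_cong: "(\<forall>i\<in>{1..k}. \<mu> i = \<mu>' i) \<Longrightarrow> shuffle_prod \<mu> k = shuffle_prod \<mu>' k"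
  by (induction k) auto

lemma sp_in_B: "\<mu> \<in> PiE {1..r} (\<lambda>_. BB n) \<Longrightarrow> k \<le> r \<Longrightarrow> shuffle_prod \<mu> k \<in> BB n"
  by (induction k) (auto simp: sp_comp PiE_iff)

definition cond :: "nat \<Rightarrow> nat \<Rightarrow> (nat \<Rightarrow> nat) \<Rightarrow> (nat \<Rightarrow> int \<Rightarrow> int) \<Rightarrow> bool" where
  "cond n r s \<mu> = (\<forall>k\<le>r. bdes n (inv (shuffle_prod \<mu> k)) = s k)"

definition wt :: "nat \<Rightarrow> nat \<Rightarrow> nat \<Rightarrow> (nat \<Rightarrow> int \<Rightarrow> int) \<Rightarrow> real" where
  "wt n b r \<mu> = (\<Prod>k\<in>{1..r}. shuffleB n b (\<mu> k))"

definition pp :: "nat \<Rightarrow> nat \<Rightarrow> nat \<Rightarrow> (nat \<Rightarrow> nat) \<Rightarrow> (int \<Rightarrow> int) \<Rightarrow> real" where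
  "pp n b r s \<tau> = (\<Sum>\<mu>\<in>PiE {1..r} (\<lambda>_. BB n). wt n b r \<mu> * of_bool (cond n r s \<mu>) * of_bool (shuffle_prod \<mu> r = \<tau>))"

lemma path_prob_alt: "path_prob n b r s = (\<Sum>\<mu>\<in>PiE {1..r} (\<lambda>_. BB n). wt n b r \<mu> * of_bool (cond n r s \<mu>))"
  unfolding path_prob_def wt_def cond_def by (simp add: of_bool_def)

lemma delta_sum: assumes "x \<in> BB n" shows "(\<Sum>\<tau>\<in>BB n. c * of_bool (x = \<tau>)) = (c :: real)"
proof -
  have "(\<Sum>\<tau>\<in>BB n. c * of_bool (x = \<tau>)) = c * (\<Sum>\<tau>\<in>BB n. of_bool (x = \<tau>))"
    by (simp add: sum_distrib_left)
  also have "(\<Sum>\<tau>\<in>BB n. (of_bool (x = \<tau>) :: real)) = 1" using assms by (simp add: of_bool_def sum.delta')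
  finally show ?thesis by simp
qed

lemma finite_PiE_BB[simp]: "finite (PiE {1..r::nat} (\<lambda>_. BB n))"
  by (rule finite_PiE) auto

lemma path_pp: "path_prob n b r s = (\<Sum>\<tau>\<in>BB n. pp n b r s \<tau>)"
proof -
  have "(\<Sum>\<tau>\<in>BB n. pp n b r s \<tau>)
      = (\<Sum>\<mu>\<in>PiE {1..r} (\<lambda>_. BB n). \<Sum>\<tau>\<in>BB n. wt n b r \<mu> * of_bool (cond n r s \<mu>) * of_bool (shuffle_prod \<mu> r = \<tau>))"
    unfolding pp_def by (rule sum.swap)
  also have "\<dots> = (\<Sum>\<mu>\<in>PiE {1..r} (\<lambda>_. BB n). wt n b r \<mu> * of_bool (cond n r s \<mu>))"
    by (rule sum.cong[OF refl], rule delta_sum, rule sp_in_B) auto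
  finally show ?thesis by (simp add: path_prob_alt)
qed

lemma pp_Suc:
  "pp n b (Suc r) s \<tau>' = (\<Sum>\<tau>\<in>BB n. \<Sum>v\<in>BB n. pp n b r s \<tau> * shuffleB n b v *
        of_bool (bdes n (inv \<tau>') = s (Suc r)) * of_bool (\<tau> \<circ> v = \<tau>'))"
proof -
  have ins: "{1..Suc r} = insert (Suc r) {1..r}" by auto
  let ?F = "\<lambda>Y v. wt n b r Y * of_bool (cond n r s Y) * shuffleB n b v *
        of_bool (bdes n (inv \<tau>') = s (Suc r)) * of_bool (shuffle_prod Y r \<circ> v = \<tau>')"
  have "pp n b (Suc r) s \<tau>' = (\<Sum>v\<in>BB n. \<Sum>Y\<in>PiE {1..r} (\<lambda>_. BB n).
      wt n b (Suc r) (Y(Suc r := v)) * of_bool (cond n (Suc r) s (Y(Suc r := v)))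
      * of_bool (shuffle_prod (Y(Suc r := v)) (Suc r) = \<tau>'))"
    unfolding pp_def ins by (rule sum_PiE_insert) auto
  also have "\<dots> = (\<Sum>v\<in>BB n. \<Sum>Y\<in>PiE {1..r} (\<lambda>_. BB n). ?F Y v)"
  proof (intro sum.cong refl)
    fix v Y assume v: "v \<in> BB n" and Y: "Y \<in> PiE {1..r} (\<lambda>_. BB n)"
    have spk: "shuffle_prod (Y(Suc r := v)) k = shuffle_prod Y k" if "k \<le> r" for k
      by (rule sp_cong) (use that in auto)
    have spS: "shuffle_prod (Y(Suc r := v)) (Suc r) = shuffle_prod Y r \<circ> v"
      using spk[of r] by simp
    have w: "wt n b (Suc r) (Y(Suc r := v)) = wt n b r Y * shuffleB n b v"
    proof -
      have "wt n b (Suc r) (Y(Suc r := v)) = shuffleB n b v * (\<Prod>k\<in>{1..r}. shuffleB n b ((Y(Suc r := v)) k))"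
        unfolding wt_def ins by (subst prod.insert) auto
      also have "(\<Prod>k\<in>{1..r}. shuffleB n b ((Y(Suc r := v)) k)) = wt n b r Y"
        unfolding wt_def by (rule prod.cong) auto
      finally show ?thesis by (metis mult.commute)
    qed
    have c: "cond n (Suc r) s (Y(Suc r := v)) \<longleftrightarrow>
        cond n r s Y \<and> bdes n (inv (shuffle_prod Y r \<circ> v)) = s (Suc r)"
      unfolding cond_def using spk spS by (auto simp: le_Suc_eq)
    show "wt n b (Suc r) (Y(Suc r := v)) * of_bool (cond n (Suc r) s (Y(Suc r := v)))
        * of_bool (shuffle_prod (Y(Suc r := v)) (Suc r) = \<tau>') = ?F Y v"
      unfolding w c spS by (auto simp: of_bool_def)
  qed
  also have "\<dots> = (\<Sum>v\<in>BB n. \<Sum>Y\<in>PiE {1..r} (\<lambda>_. BB n). \<Sum>\<tau>\<in>BB n.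
       wt n b r Y * of_bool (cond n r s Y) * of_bool (shuffle_prod Y r = \<tau>) * shuffleB n b v *
        of_bool (bdes n (inv \<tau>') = s (Suc r)) * of_bool (\<tau> \<circ> v = \<tau>'))"
  proof (intro sum.cong refl)
    fix v Y assume Y: "Y \<in> PiE {1..r} (\<lambda>_. BB n)"
    have inB: "shuffle_prod Y r \<in> BB n" by (rule sp_in_B[OF Y]) simp
    have "(\<Sum>\<tau>\<in>BB n. wt n b r Y * of_bool (cond n r s Y) * of_bool (shuffle_prod Y r = \<tau>) * shuffleB n b v *
        of_bool (bdes n (inv \<tau>') = s (Suc r)) * of_bool (\<tau> \<circ> v = \<tau>'))
        = (\<Sum>\<tau>\<in>BB n. ?F Y v * of_bool (shuffle_prod Y r = \<tau>))"
      by (rule sum.cong) (auto simp: of_bool_def)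
    also have "\<dots> = ?F Y v" by (rule delta_sum[OF inB])
    finally show "?F Y v = (\<Sum>\<tau>\<in>BB n. wt n b r Y * of_bool (cond n r s Y) * of_bool (shuffle_prod Y r = \<tau>) * shuffleB n b v *
        of_bool (bdes n (inv \<tau>') = s (Suc r)) * of_bool (\<tau> \<circ> v = \<tau>'))" by simp
  qed
  also have "\<dots> = (\<Sum>v\<in>BB n. \<Sum>\<tau>\<in>BB n. \<Sum>Y\<in>PiE {1..r} (\<lambda>_. BB n).
       wt n b r Y * of_bool (cond n r s Y) * of_bool (shuffle_prod Y r = \<tau>) * shuffleB n b v *
        of_bool (bdes n (inv \<tau>') = s (Suc r)) * of_bool (\<tau> \<circ> v = \<tau>'))"
    by (rule sum.cong[OF refl], rule sum.swap)
  also have "\<dots> = (\<Sum>\<tau>\<in>BB n. \<Sum>v\<in>BB n. \<Sum>Y\<in>PiE {1..r} (\<lambda>_. BB n).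
       wt n b r Y * of_bool (cond n r s Y) * of_bool (shuffle_prod Y r = \<tau>) * shuffleB n b v *
        of_bool (bdes n (inv \<tau>') = s (Suc r)) * of_bool (\<tau> \<circ> v = \<tau>'))"
    by (rule sum.swap)
  also have "\<dots> = (\<Sum>\<tau>\<in>BB n. \<Sum>v\<in>BB n. pp n b r s \<tau> * shuffleB n b v *
        of_bool (bdes n (inv \<tau>') = s (Suc r)) * of_bool (\<tau> \<circ> v = \<tau>'))"
    unfolding pp_def by (simp add: sum_distrib_right)
  finally show ?thesis .
qed




definition MM :: "nat \<Rightarrow> nat \<Rightarrow> nat \<Rightarrow> nat \<Rightarrow> real" where
  "MM n b j i = real (card {X \<in> Xset n b. (j + b + sum X {1..n}) div (2*b+1) = i})"

lemma carriesB_MM: "carriesB n b j i = MM n b j i / real (2*b+1)^n"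
  unfolding carriesB_def MM_def Xset_def by simp

lemma euler0: assumes n: "n \<ge> 1" shows "eulerB n 0 = 1"
proof -
  have "{\<sigma> \<in> BB n. bdes n \<sigma> = 0} = {id}" using bdes0[OF n] bdes_id[OF n] by auto
  thus ?thesis unfolding eulerB_def by simp
qed

lemma pp_0: assumes n: "n \<ge> 1" shows "pp n b 0 s \<tau> = of_bool (s 0 = 0) * of_bool (\<tau> = id)"
  unfolding pp_def wt_def cond_def using bdes_id[OF n] by (auto simp: of_bool_def)

lemma path0: assumes n: "n \<ge> 1" shows "path_prob n b 0 s = (if s 0 = 0 then 1 else 0)"
  unfolding path_prob_def using bdes_id[OF n] by simp

lemma sum_v: assumes t: "\<tau> \<in> BB n" and t': "\<tau>' \<in> BB n"
  shows "(\<Sum>v\<in>BB n. shuffleB n b v * of_bool (\<tau> \<circ> v = \<tau>')) = shuffleB n b (inv \<tau> \<circ> \<tau>')"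
proof -
  have "(\<Sum>v\<in>BB n. shuffleB n b v * of_bool (\<tau> \<circ> v = \<tau>')) = (\<Sum>v\<in>BB n. shuffleB n b v * of_bool (inv \<tau> \<circ> \<tau>' = v))"
  proof (rule sum.cong[OF refl])
    fix v assume v: "v \<in> BB n"
    have "\<tau> \<circ> v = \<tau>' \<longleftrightarrow> inv \<tau> \<circ> \<tau>' = v"
    proof
      assume "\<tau> \<circ> v = \<tau>'" thus "inv \<tau> \<circ> \<tau>' = v" using comp_inv_cancel[OF t, of v] by simp
    next
      assume "inv \<tau> \<circ> \<tau>' = v" thus "\<tau> \<circ> v = \<tau>'" using comp_inv_cancel2[OF t, of \<tau>'] by simp
    qed
    thus "shuffleB n b v * of_bool (\<tau> \<circ> v = \<tau>') = shuffleB n b v * of_bool (inv \<tau> \<circ> \<tau>' = v)" by simp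
  qed
  also have "\<dots> = (\<Sum>v\<in>BB n. if inv \<tau> \<circ> \<tau>' = v then shuffleB n b v else 0)"
    by (rule sum.cong) auto
  also have "\<dots> = shuffleB n b (inv \<tau> \<circ> \<tau>')"
    using sp_comp[OF sp_inv[OF t] t'] by (simp add: sum.delta')
  finally show ?thesis .
qed

lemma card_euler_real: "(\<Sum>\<tau>\<in>BB n. (of_bool (bdes n (inv \<tau>) = j) :: real)) = real (eulerB n j)"
  by (simp add: eulerB_inv of_bool_def sum.If_cases Int_def conj_commute)

lemma step_path:
  assumes n: "n \<ge> 1"
    and IH: "\<And>\<tau>. \<tau> \<in> BB n \<Longrightarrow> pp n b r s \<tau> = of_bool (bdes n (inv \<tau>) = s r) * path_prob n b r s / real (eulerB n (s r))"
  shows "(\<forall>\<tau>'\<in>BB n. pp n b (Suc r) s \<tau>' = of_bool (bdes n (inv \<tau>') = s (Suc r)) * (path_prob n b r s / real (eulerB n (s r)))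
      * MM n b (bdes n (inv \<tau>')) (s r) / real (2*b+1)^n)
    \<and> path_prob n b (Suc r) s = real (eulerB n (s (Suc r))) * (path_prob n b r s / real (eulerB n (s r))) * MM n b (s (Suc r)) (s r) / real (2*b+1)^n"
proof -
  let ?i = "s r" and ?j = "s (Suc r)" and ?m = "real (2*b+1)^n"
  have step: "pp n b (Suc r) s \<tau>' = of_bool (bdes n (inv \<tau>') = ?j) * (path_prob n b r s / real (eulerB n ?i))
      * MM n b (bdes n (inv \<tau>')) ?i / ?m" if t': "\<tau>' \<in> BB n" for \<tau>'
  proof -
    have "pp n b (Suc r) s \<tau>' = (\<Sum>\<tau>\<in>BB n. \<Sum>v\<in>BB n. pp n b r s \<tau> * shuffleB n b v *
        of_bool (bdes n (inv \<tau>') = ?j) * of_bool (\<tau> \<circ> v = \<tau>'))" by (rule pp_Suc)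
    also have "\<dots> = (\<Sum>\<tau>\<in>BB n. pp n b r s \<tau> * of_bool (bdes n (inv \<tau>') = ?j) *
        (\<Sum>v\<in>BB n. shuffleB n b v * of_bool (\<tau> \<circ> v = \<tau>')))"
    proof (rule sum.cong[OF refl])
      fix \<tau>
      have "(\<Sum>v\<in>BB n. pp n b r s \<tau> * shuffleB n b v * of_bool (bdes n (inv \<tau>') = ?j) * of_bool (\<tau> \<circ> v = \<tau>'))
          = (\<Sum>v\<in>BB n. (pp n b r s \<tau> * of_bool (bdes n (inv \<tau>') = ?j)) * (shuffleB n b v * of_bool (\<tau> \<circ> v = \<tau>')))"
        by (rule sum.cong) (simp_all add: mult_ac)
      also have "\<dots> = (pp n b r s \<tau> * of_bool (bdes n (inv \<tau>') = ?j)) * (\<Sum>v\<in>BB n. shuffleB n b v * of_bool (\<tau> \<circ> v = \<tau>'))"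
        by (rule sum_distrib_left[symmetric])
      finally show "(\<Sum>v\<in>BB n. pp n b r s \<tau> * shuffleB n b v * of_bool (bdes n (inv \<tau>') = ?j) * of_bool (\<tau> \<circ> v = \<tau>'))
          = pp n b r s \<tau> * of_bool (bdes n (inv \<tau>') = ?j) * (\<Sum>v\<in>BB n. shuffleB n b v * of_bool (\<tau> \<circ> v = \<tau>'))" .
    qed
    also have "\<dots> = (\<Sum>\<tau>\<in>BB n. pp n b r s \<tau> * of_bool (bdes n (inv \<tau>') = ?j) * shuffleB n b (inv \<tau> \<circ> \<tau>'))"
    proof (rule sum.cong[OF refl])
      fix \<tau> assume "\<tau> \<in> BB n"
      show "pp n b r s \<tau> * of_bool (bdes n (inv \<tau>') = ?j) * (\<Sum>v\<in>BB n. shuffleB n b v * of_bool (\<tau> \<circ> v = \<tau>'))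
          = pp n b r s \<tau> * of_bool (bdes n (inv \<tau>') = ?j) * shuffleB n b (inv \<tau> \<circ> \<tau>')"
        by (simp only: sum_v[OF \<open>\<tau> \<in> BB n\<close> t'])
    qed
    also have "\<dots> = (\<Sum>\<tau>\<in>BB n. (of_bool (bdes n (inv \<tau>') = ?j) * (path_prob n b r s / real (eulerB n ?i))) *
         (of_bool (bdes n (inv \<tau>) = ?i) * shuffleB n b (inv \<tau> \<circ> \<tau>')))"
      by (rule sum.cong[OF refl]) (simp add: IH mult_ac)
    also have "\<dots> = of_bool (bdes n (inv \<tau>') = ?j) * (path_prob n b r s / real (eulerB n ?i)) *
         (\<Sum>\<tau>\<in>BB n. of_bool (bdes n (inv \<tau>) = ?i) * shuffleB n b (inv \<tau> \<circ> \<tau>'))"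
      by (rule sum_distrib_left[symmetric])
    also have "(\<Sum>\<tau>\<in>BB n. of_bool (bdes n (inv \<tau>) = ?i) * shuffleB n b (inv \<tau> \<circ> \<tau>')) = MM n b (bdes n (inv \<tau>')) ?i / ?m"
      unfolding MM_def by (rule W_sum[OF n t'])
    finally show ?thesis by simp
  qed
  have path: "path_prob n b (Suc r) s = real (eulerB n ?j) * (path_prob n b r s / real (eulerB n ?i)) * MM n b ?j ?i / ?m"
  proof -
    have "path_prob n b (Suc r) s = (\<Sum>\<tau>'\<in>BB n. pp n b (Suc r) s \<tau>')" by (rule path_pp)
    also have "\<dots> = (\<Sum>\<tau>'\<in>BB n. of_bool (bdes n (inv \<tau>') = ?j) * ((path_prob n b r s / real (eulerB n ?i)) * MM n b ?j ?i / ?m))"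
      by (rule sum.cong[OF refl]) (auto simp: step of_bool_def)
    also have "\<dots> = (\<Sum>\<tau>'\<in>BB n. of_bool (bdes n (inv \<tau>') = ?j)) * ((path_prob n b r s / real (eulerB n ?i)) * MM n b ?j ?i / ?m)"
      by (rule sum_distrib_right[symmetric])
    also have "\<dots> = real (eulerB n ?j) * ((path_prob n b r s / real (eulerB n ?i)) * MM n b ?j ?i / ?m)"
      by (simp only: card_euler_real)
    finally show ?thesis by simp
  qed
  show ?thesis using step path by blast
qed

lemma main_claim:
  assumes n: "n \<ge> 1"
  shows "\<tau> \<in> BB n \<Longrightarrow> pp n b r s \<tau> = of_bool (bdes n (inv \<tau>) = s r) * path_prob n b r s / real (eulerB n (s r))"
proof (induction r arbitrary: \<tau>)
  case 0
  show ?case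
  proof (cases "s 0 = 0")
    case True
    have "bdes n (inv \<tau>) = 0 \<longleftrightarrow> \<tau> = id"
    proof
      assume "bdes n (inv \<tau>) = 0"
      hence "inv \<tau> = id" using bdes0[OF n sp_inv[OF "0.prems"]] by simp
      thus "\<tau> = id" using sp_inv_inv[OF "0.prems"] by (metis inv_id)
    qed (use bdes_id[OF n] in simp)
    thus ?thesis using True pp_0[OF n] path0[OF n] euler0[OF n] by simp
  next
    case False
    thus ?thesis using pp_0[OF n] path0[OF n] by simp
  qed
next
  case (Suc r)
  note sp = step_path[OF n Suc.IH]
  have step: "pp n b (Suc r) s \<tau>' = of_bool (bdes n (inv \<tau>') = s (Suc r)) * (path_prob n b r s / real (eulerB n (s r)))
      * MM n b (bdes n (inv \<tau>')) (s r) / real (2*b+1)^n" if "\<tau>' \<in> BB n" for \<tau>'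
    using sp that by blast
  have path: "path_prob n b (Suc r) s = real (eulerB n (s (Suc r))) * (path_prob n b r s / real (eulerB n (s r))) * MM n b (s (Suc r)) (s r) / real (2*b+1)^n"
    using sp by blast
  let ?j = "s (Suc r)"
  show ?case
  proof (cases "bdes n (inv \<tau>) = ?j")
    case False thus ?thesis using step[OF Suc.prems] by simp
  next
    case True
    hence "\<tau> \<in> {\<tau> \<in> BB n. bdes n (inv \<tau>) = ?j}" using Suc.prems by simp
    hence "eulerB n ?j \<noteq> 0" unfolding eulerB_inv by (metis (no_types, lifting) card_0_eq empty_iff finite_sp finite_subset mem_Collect_eq subsetI)
    thus ?thesis using step[OF Suc.prems] path True by simp
  qed
qed

lemma path_step:
  assumes n: "n \<ge> 1"
  shows "path_prob n b (Suc r) s = real (eulerB n (s (Suc r))) * (path_prob n b r s / real (eulerB n (s r)))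
          * MM n b (s (Suc r)) (s r) / real (2*b+1)^n"
  using step_path[OF n main_claim[OF n]] by blast




lemma sum_card_fibers:
  assumes "finite S" "\<And>x. x \<in> S \<Longrightarrow> f x \<le> (n::nat)"
  shows "(\<Sum>i\<le>n. card {x \<in> S. f x = i}) = card S"
proof -
  have "(\<Sum>i\<le>n. \<Sum>x\<in>{x \<in> S. f x = i}. (1::nat)) = (\<Sum>x\<in>S. 1)"
    by (rule sum.group) (use assms in auto)
  thus ?thesis by simp
qed

lemma colsum:
  assumes j: "j \<le> n"
  shows "(\<Sum>i\<le>n. MM n b j i) = real (2*b+1)^n"
proof -
  have bound: "(j + b + sum X {1..n}) div (2*b+1) \<le> n" if X: "X \<in> Xset n b" for X
  proof -
    have "sum X {1..n} \<le> of_nat (card {1..n}) * (2*b)"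
      by (rule sum_bounded_above) (use X in \<open>auto simp: Xset_def PiE_iff\<close>)
    hence "sum X {1..n} \<le> n * (2*b)" by simp
    hence "j + b + sum X {1..n} < Suc n * (2*b+1)" using j by (simp add: algebra_simps)
    hence "(j + b + sum X {1..n}) div (2*b+1) < Suc n" by (rule less_mult_imp_div_less)
    thus ?thesis by simp
  qed
  have "(\<Sum>i\<le>n. card {X \<in> Xset n b. (j + b + sum X {1..n}) div (2*b+1) = i}) = card (Xset n b)"
    by (rule sum_card_fibers) (use bound in auto)
  hence "real (\<Sum>i\<le>n. card {X \<in> Xset n b. (j + b + sum X {1..n}) div (2*b+1) = i}) = real ((2*b+1)^n)"
    by (simp add: card_Xset)
  thus ?thesis unfolding MM_def by simp
qed

lemma sum_euler: assumes n: "n \<ge> 1" shows "(\<Sum>j\<le>n. eulerB n j) = card (BB n)"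
  unfolding eulerB_def by (rule sum_card_fibers) (auto simp: bdes_le[OF n])

lemma rowsum:
  assumes n: "n \<ge> 1"
  shows "(\<Sum>j\<le>n. real (eulerB n j) * MM n b j i) = real (2*b+1)^n * real (eulerB n i)"
proof -
  have "(\<Sum>\<rho>\<in>BB n. MM n b (bdes n \<rho>) i)
      = (\<Sum>\<rho>\<in>BB n. \<Sum>\<nu>\<in>BB n. real ((n + b - bdes n \<nu>) choose n) * of_bool (bdes n (inv \<nu> \<circ> \<rho>) = i))"
  proof (rule sum.cong[OF refl])
    fix \<rho> assume "\<rho> \<in> BB n"
    show "MM n b (bdes n \<rho>) i = (\<Sum>\<nu>\<in>BB n. real ((n + b - bdes n \<nu>) choose n) * of_bool (bdes n (inv \<nu> \<circ> \<rho>) = i))"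
      unfolding MM_def by (rule L1[OF n \<open>\<rho> \<in> BB n\<close>, symmetric])
  qed
  also have "\<dots> = (\<Sum>\<nu>\<in>BB n. \<Sum>\<rho>\<in>BB n. real ((n + b - bdes n \<nu>) choose n) * of_bool (bdes n (inv \<nu> \<circ> \<rho>) = i))"
    by (rule sum.swap)
  also have "\<dots> = (\<Sum>\<nu>\<in>BB n. real ((n + b - bdes n \<nu>) choose n) * real (eulerB n i))"
  proof (rule sum.cong[OF refl])
    fix \<nu> assume \<nu>: "\<nu> \<in> BB n"
    have "(\<Sum>\<rho>\<in>BB n. (of_bool (bdes n (inv \<nu> \<circ> \<rho>) = i) :: real)) = (\<Sum>\<sigma>\<in>BB n. of_bool (bdes n \<sigma> = i))"
      by (rule sum.reindex_bij_witness[where i="\<lambda>\<sigma>. \<nu> \<circ> \<sigma>" and j="\<lambda>\<rho>. inv \<nu> \<circ> \<rho>"])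
         (use \<nu> in \<open>auto simp: sp_comp sp_inv comp_inv_cancel comp_inv_cancel2\<close>)
    also have "\<dots> = real (eulerB n i)" unfolding eulerB_def
      by (simp add: of_bool_def sum.If_cases Int_def conj_commute)
    finally have e: "(\<Sum>\<rho>\<in>BB n. (of_bool (bdes n (inv \<nu> \<circ> \<rho>) = i) :: real)) = real (eulerB n i)" .
    show "(\<Sum>\<rho>\<in>BB n. real ((n + b - bdes n \<nu>) choose n) * of_bool (bdes n (inv \<nu> \<circ> \<rho>) = i))
        = real ((n + b - bdes n \<nu>) choose n) * real (eulerB n i)"
      by (simp only: sum_distrib_left[symmetric] e)
  qed
  also have "\<dots> = real (2*b+1)^n * real (eulerB n i)"
    by (simp only: sum_distrib_right[symmetric] total_weight[OF n]) simp
  finally have A: "(\<Sum>\<rho>\<in>BB n. MM n b (bdes n \<rho>) i) = real (2*b+1)^n * real (eulerB n i)" .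
  have "(\<Sum>\<rho>\<in>BB n. MM n b (bdes n \<rho>) i) = (\<Sum>j\<le>n. \<Sum>\<rho>\<in>{\<rho> \<in> BB n. bdes n \<rho> = j}. MM n b (bdes n \<rho>) i)"
    by (rule sum.group[symmetric]) (auto simp: bdes_le[OF n])
  also have "\<dots> = (\<Sum>j\<le>n. real (eulerB n j) * MM n b j i)"
    by (rule sum.cong[OF refl]) (simp add: eulerB_def)
  finally show ?thesis using A by simp
qed

definition sigma_i :: "nat \<Rightarrow> nat \<Rightarrow> int \<Rightarrow> int" where
  "sigma_i n i x = (if x \<in> SS n \<and> \<bar>x\<bar> > int n - int i then - x else x)"

lemma sigma_i_sp: "sigma_i n i \<in> BB n"
proof -
  have inv: "sigma_i n i (sigma_i n i x) = x" for x by (auto simp: sigma_i_def)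
  have into: "x \<in> SS n \<Longrightarrow> sigma_i n i x \<in> SS n" for x by (auto simp: sigma_i_def)
  have b: "bij_betw (sigma_i n i) (SS n) (SS n)"
    by (rule bij_betw_byWitness[where f'="sigma_i n i"]) (use inv into in auto)
  have out: "\<And>x. x \<notin> SS n \<Longrightarrow> sigma_i n i x = x" unfolding sigma_i_def by auto
  have perm: "sigma_i n i permutes SS n" using bij_imp_permutes[OF b] out by blast
  have odd: "sigma_i n i (- x) = - sigma_i n i x" for x by (auto simp: sigma_i_def)
  show ?thesis unfolding signed_perms_def using perm odd by blast
qed

lemma bdes_sigma_i:
  assumes n: "n \<ge> 1" and i: "i \<le> n"
  shows "bdes n (sigma_i n i) = i"
proof -
  have "{k \<in> {1..n}. dd n (sigma_i n i) k} = {n - i + 1..n}"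
  proof (intro equalityI subsetI)
    fix k assume "k \<in> {k \<in> {1..n}. dd n (sigma_i n i) k}"
    hence k: "1 \<le> k" "k \<le> n" "dd n (sigma_i n i) k" by auto
    show "k \<in> {n - i + 1..n}"
    proof (rule ccontr)
      assume "k \<notin> {n - i + 1..n}"
      hence kl: "k \<le> n - i" using k by auto
      show False
      proof (cases "k < n")
        case True
        have "sigma_i n i (int k) = int k" using kl k by (auto simp: sigma_i_def)
        moreover have "brank n (int k) = int k" using k by (simp add: brank_def)
        moreover have "brank n (sigma_i n i (int k + 1)) \<ge> int k + 1"
          using kl k True by (auto simp: sigma_i_def brank_def)
        ultimately show False using k(3) True by (simp add: dd_def)
      next
        case False
        hence "k = n" "i = 0" using k kl by auto
        thus False using k(3) n by (simp add: dd_def sigma_i_def)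
      qed
    qed
  next
    fix k assume "k \<in> {n - i + 1..n}"
    hence k: "n - i + 1 \<le> k" "k \<le> n" by auto
    have "dd n (sigma_i n i) k"
    proof (cases "k < n")
      case True
      have "sigma_i n i (int k) = - int k" using k i by (auto simp: sigma_i_def)
      moreover have "sigma_i n i (int k + 1) = - (int k + 1)" using k i True by (auto simp: sigma_i_def)
      ultimately show ?thesis using True k by (simp add: dd_def brank_def)
    next
      case False
      hence "k = n" using k by simp
      thus ?thesis using k i n by (auto simp: dd_def sigma_i_def)
    qed
    thus "k \<in> {k \<in> {1..n}. dd n (sigma_i n i) k}" using k by auto
  qed
  thus ?thesis using i by (simp add: bdes_eq[OF n])
qed

lemma euler_pos: assumes n: "n \<ge> 1" and i: "i \<le> n" shows "eulerB n i > 0"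
proof -
  have "sigma_i n i \<in> {\<sigma> \<in> BB n. bdes n \<sigma> = i}" using sigma_i_sp bdes_sigma_i[OF n i] by simp
  hence "{\<sigma> \<in> BB n. bdes n \<sigma> = i} \<noteq> {}" by blast
  thus ?thesis unfolding eulerB_def by (simp add: card_gt_0_iff)
qed





theorem theorem4p3:
  fixes n b :: nat
  assumes "n \<ge> 1" and "b \<ge> 1"
  defines "K \<equiv> (\<lambda>i j. piB n j * carriesB n b j i / piB n i)"
  shows "(\<forall>r s. path_prob n b (Suc r) s = path_prob n b r s * K (s r) (s (Suc r)))
       \<and> (\<forall>s. path_prob n b 0 s = (if s 0 = 0 then 1 else 0))
       \<and> (\<forall>i\<le>n. (\<Sum>j\<le>n. K i j) = 1)
       \<and> (\<Sum>j\<le>n. piB n j) = 1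
       \<and> (\<forall>j\<le>n. (\<Sum>i\<le>n. piB n i * K i j) = piB n j)"
proof -
  have n: "n \<ge> 1" by fact
  define F :: real where "F = 2 ^ n * fact n"
  define m :: real where "m = real (2*b+1)^n"
  have Fpos: "F > 0" unfolding F_def by simp
  have mpos: "m > 0" unfolding m_def by simp
  have piB_eq: "piB n j = real (eulerB n j) / F" for j unfolding piB_def F_def by simp
  have Kform: "K i j = real (eulerB n j) * MM n b j i / (m * real (eulerB n i))" for i j
  proof (cases "eulerB n i = 0")
    case True thus ?thesis unfolding K_def piB_eq by simp
  next
    case False thus ?thesis unfolding K_def piB_eq carriesB_MM m_def using Fpos by (simp add: field_simps)
  qed
  have c1: "path_prob n b (Suc r) s = path_prob n b r s * K (s r) (s (Suc r))" for r s
    unfolding path_step[OF n] Kform m_def by (simp add: field_simps)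
  have c3: "(\<Sum>j\<le>n. K i j) = 1" if i: "i \<le> n" for i
  proof -
    have pos: "real (eulerB n i) > 0" using euler_pos[OF n i] by simp
    have "(\<Sum>j\<le>n. K i j) = (\<Sum>j\<le>n. real (eulerB n j) * MM n b j i) / (m * real (eulerB n i))"
      unfolding Kform by (simp add: sum_divide_distrib)
    also have "\<dots> = 1" unfolding rowsum[OF n] m_def using pos mpos m_def by simp
    finally show ?thesis .
  qed
  have c4: "(\<Sum>j\<le>n. piB n j) = 1"
  proof -
    have "(\<Sum>j\<le>n. piB n j) = real (\<Sum>j\<le>n. eulerB n j) / F"
      unfolding piB_eq by (simp add: sum_divide_distrib)
    also have "\<dots> = 1" unfolding sum_euler[OF n] card_BB F_def by simp
    finally show ?thesis .
  qed
  have c5: "(\<Sum>i\<le>n. piB n i * K i j) = piB n j" if j: "j \<le> n" for j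
  proof -
    have "(\<Sum>i\<le>n. piB n i * K i j) = (\<Sum>i\<le>n. piB n j * (MM n b j i / m))"
    proof (rule sum.cong[OF refl])
      fix i assume "i \<in> {..n}"
      hence "real (eulerB n i) > 0" using euler_pos[OF n] by simp
      thus "piB n i * K i j = piB n j * (MM n b j i / m)"
        unfolding K_def carriesB_MM m_def piB_eq using Fpos by (simp add: field_simps)
    qed
    also have "\<dots> = piB n j * ((\<Sum>i\<le>n. MM n b j i) / m)"
      by (simp add: sum_distrib_left sum_divide_distrib)
    also have "\<dots> = piB n j" unfolding colsum[OF j] m_def by simp
    finally show ?thesis .
  qed
  show ?thesis using c1 path0[OF n] c3 c4 c5 by blast
qed


end
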